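(* Let $K$ be a field and $q\in K$ a primitive $e$-th root of unity, where $e\ge 2$ is even. Let $D$ be the one-dimensional $\mathcal{H}_q(D_e)$-module on which $T_i^D$ acts as $-1$ for $0\le i\le e-1$, and $P$ its projective cover. Let $D^\lambda$ be the one-dimensional $\mathcal{H}_{q,1}(B_e)$-module on which $T_i^B$ acts as $-1$ for $0\le i\le e-1$, and $P^\lambda$ its projective cover. Then $P\cong \mathrm{Res}(P^\lambda)$ as $\mathcal{H}_q(D_e)$-modules.
   Context: $\mathcal{H}_{q,1}(B_n)$ is the $K$-algebra with generators $T_0^B,\dots,T_{n-1}^B$ and relations $(T_0^B+1)(T_0^B-1)=0$, $(T_i^B+1)(T_i^B-q)=0$ ($1\le i\le n-1$), $T_0^BT_1^BT_0^BT_1^B=T_1^BT_0^BT_1^BT_0^B$, $T_{i+1}^BT_i^BT_{i+1}^B=T_i^BT_{i+1}^BT_i^B$ ($1\le i\le n-2$), $T_i^BT_j^B=T_j^BT_i^B$ ($0\le i<j-1\le n-2$). $\mathcal{H}_q(D_n)$ is the $K$-algebra with generators $T_0^D,\dots,T_{n-1}^D$ and relations $(T_i^D+1)(T_i^D-q)=0$ ($0\le i\le n-1$), $T_0^DT_2^DT_0^D=T_2^DT_0^DT_2^D$, $T_0^DT_i^D=T_i^DT_0^D$ ($i\neq 2$), $T_{i+1}^DT_i^DT_{i+1}^D=T_i^DT_{i+1}^DT_i^D$ ($1\le i\le n-2$), $T_i^DT_j^D=T_j^DT_i^D$ ($1\le i<j-1\le n-2$). $\mathrm{Res}$ denotes restriction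 along the injective algebra homomorphism $\phi:\mathcal{H}_q(D_n)\to\mathcal{H}_{q,1}(B_n)$, $T_0^D\mapsto T_0^BT_1^BT_0^B$, $T_i^D\mapsto T_i^B$ ($1\le i\le n-1$). *)

theory Defs
  imports "Jordan_Normal_Form.Matrix"
begin

text \<open>Finite-dimensional modules over a K-algebra given by generators T_0,...,T_(n-1) and
relations are encoded as matrix representations: a pair (d, T) where T i is a d x d matrix
over K giving the action of the i-th generator on K^d (column vectors).\<close>

type_synonym 'a rep = "nat \<times> (nat \<Rightarrow> 'a mat)"

definition primitive_root_of_unity :: "'a::field \<Rightarrow> nat \<Rightarrow> bool" where
  "primitive_root_of_unity q e \<longleftrightarrow> q ^ e = 1 \<and> (\<forall>k. 0 < k \<and> k < e \<longrightarrow> q ^ k \<noteq> 1)"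

definition hecke_B_rep :: "'a::field \<Rightarrow> nat \<Rightarrow> 'a rep \<Rightarrow> bool" where
  "hecke_B_rep q n M \<longleftrightarrow> (let d = fst M; T = snd M in
     (\<forall>i<n. T i \<in> carrier_mat d d) \<and>
     (T 0 + 1\<^sub>m d) * (T 0 - 1\<^sub>m d) = 0\<^sub>m d d \<and>
     (\<forall>i. 1 \<le> i \<and> i \<le> n - 1 \<longrightarrow> (T i + 1\<^sub>m d) * (T i - q \<cdot>\<^sub>m 1\<^sub>m d) = 0\<^sub>m d d) \<and>
     (2 \<le> n \<longrightarrow> T 0 * T 1 * T 0 * T 1 = T 1 * T 0 * T 1 * T 0) \<and>
     (\<forall>i. 1 \<le> i \<and> i + 2 \<le> n \<longrightarrow> T (i+1) * T i * T (i+1) = T i * T (i+1) * T i) \<and>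
     (\<forall>i j. i + 1 < j \<and> j \<le> n - 1 \<longrightarrow> T i * T j = T j * T i))"

definition hecke_D_rep :: "'a::field \<Rightarrow> nat \<Rightarrow> 'a rep \<Rightarrow> bool" where
  "hecke_D_rep q n M \<longleftrightarrow> (let d = fst M; T = snd M in
     (\<forall>i<n. T i \<in> carrier_mat d d) \<and>
     (\<forall>i<n. (T i + 1\<^sub>m d) * (T i - q \<cdot>\<^sub>m 1\<^sub>m d) = 0\<^sub>m d d) \<and>
     (3 \<le> n \<longrightarrow> T 0 * T 2 * T 0 = T 2 * T 0 * T 2) \<and>
     (\<forall>i. 1 \<le> i \<and> i \<le> n - 1 \<and> i \<noteq> 2 \<longrightarrow> T 0 * T i = T i * T 0) \<and>
     (\<forall>i. 1 \<le> i \<and> i + 2 \<le> n \<longrightarrow> T (i+1) * T i * T (i+1) = T i * T (i+1) * T i) \<and>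
     (\<forall>i j. 1 \<le> i \<and> i + 1 < j \<and> j \<le> n - 1 \<longrightarrow> T i * T j = T j * T i))"

definition rep_hom :: "nat \<Rightarrow> 'a::field rep \<Rightarrow> 'a rep \<Rightarrow> 'a mat \<Rightarrow> bool" where
  "rep_hom n M N f \<longleftrightarrow> f \<in> carrier_mat (fst N) (fst M) \<and>
     (\<forall>i<n. f * snd M i = snd N i * f)"

definition surj_mat :: "'a::field mat \<Rightarrow> bool" where
  "surj_mat f \<longleftrightarrow> (\<forall>w \<in> carrier_vec (dim_row f). \<exists>v \<in> carrier_vec (dim_col f). f *\<^sub>v v = w)"

definition rep_iso :: "nat \<Rightarrow> 'a::field rep \<Rightarrow> 'a rep \<Rightarrow> bool" where
  "rep_iso n M N \<longleftrightarrow> (\<exists>f g. rep_hom n M N f \<and> rep_hom n N M g \<and>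
      g * f = 1\<^sub>m (fst M) \<and> f * g = 1\<^sub>m (fst N))"

definition submodule :: "nat \<Rightarrow> 'a::field rep \<Rightarrow> 'a vec set \<Rightarrow> bool" where
  "submodule n M U \<longleftrightarrow> U \<subseteq> carrier_vec (fst M) \<and> 0\<^sub>v (fst M) \<in> U \<and>
     (\<forall>u\<in>U. \<forall>v\<in>U. u + v \<in> U) \<and> (\<forall>c. \<forall>u\<in>U. c \<cdot>\<^sub>v u \<in> U) \<and>
     (\<forall>i<n. \<forall>u\<in>U. snd M i *\<^sub>v u \<in> U)"

text \<open>Testing the lifting property against finite-dimensional modules suffices for a
finite-dimensional module over a finite-dimensional algebra.\<close>
definition projective_rep :: "('a::field rep \<Rightarrow> bool) \<Rightarrow> nat \<Rightarrow> 'a rep \<Rightarrow> bool" where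
  "projective_rep isrep n P \<longleftrightarrow> isrep P \<and>
     (\<forall>M N f g. isrep M \<and> isrep N \<and> rep_hom n M N f \<and> surj_mat f \<and> rep_hom n P N g
        \<longrightarrow> (\<exists>h. rep_hom n P M h \<and> f * h = g))"

definition projective_cover :: "('a::field rep \<Rightarrow> bool) \<Rightarrow> nat \<Rightarrow> 'a rep \<Rightarrow> 'a rep \<Rightarrow> bool" where
  "projective_cover isrep n P S \<longleftrightarrow> projective_rep isrep n P \<and> isrep S \<and>
     (\<exists>\<pi>. rep_hom n P S \<pi> \<and> surj_mat \<pi> \<and>
        (\<forall>U. submodule n P U \<and>
             {u + k | u k. u \<in> U \<and> k \<in> carrier_vec (fst P) \<and> \<pi> *\<^sub>v k = 0\<^sub>v (fst S)}
               = carrier_vec (fst P)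
             \<longrightarrow> U = carrier_vec (fst P)))"

definition sign_rep :: "'a::field rep" where
  "sign_rep = (1, \<lambda>i. mat 1 1 (\<lambda>_. -1))"

definition Res :: "'a::field rep \<Rightarrow> 'a rep" where
  "Res M = (fst M, \<lambda>i. if i = 0 then snd M 0 * snd M 1 * snd M 0 else snd M i)"

end

theory Submission
  imports Defs "Jordan_Normal_Form.Determinant"
begin


lemma mm_comm3: "A \<in> carrier_mat n n \<Longrightarrow> B \<in> carrier_mat n n \<Longrightarrow> dim_row X = n \<Longrightarrow>
  A * B = B * A \<Longrightarrow> A * (B * X) = B * (A * X)"
proof -
  assume a: "A \<in> carrier_mat n n" "B \<in> carrier_mat n n" "dim_row X = n" "A * B = B * A"
  have X: "X \<in> carrier_mat n (dim_col X)" by (rule carrier_matI[OF a(3) refl])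
  have "A * (B * X) = (A * B) * X" using a(1,2) X by (rule assoc_mult_mat[symmetric])
  also have "\<dots> = (B * A) * X" by (simp only: a(4))
  also have "\<dots> = B * (A * X)" using a(2,1) X by (rule assoc_mult_mat)
  finally show ?thesis .
qed

lemma mm_inv3: "(A::'a::field mat) \<in> carrier_mat n n \<Longrightarrow> dim_row X = n \<Longrightarrow>
  A * A = 1\<^sub>m n \<Longrightarrow> A * (A * X) = X"
proof -
  assume a: "A \<in> carrier_mat n n" "dim_row X = n" "A * A = 1\<^sub>m n"
  have X: "X \<in> carrier_mat n (dim_col X)" by (rule carrier_matI[OF a(2) refl])
  have "A * (A * X) = (A * A) * X" using a(1,1) X by (rule assoc_mult_mat[symmetric])
  also have "\<dots> = 1\<^sub>m n * X" by (simp only: a(3))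
  also have "\<dots> = X" using X by simp
  finally show ?thesis .
qed

lemma grp1: "X \<in> carrier_mat n m \<Longrightarrow> Y \<in> carrier_mat n m \<Longrightarrow> Z \<in> carrier_mat n m \<Longrightarrow>
  (X + Y) - (Y + Z) = X - (Z :: 'a::ab_group_add mat)"
  by (intro eq_matI) auto
lemma grp2: assumes "X \<in> carrier_mat n m" "Z \<in> carrier_mat n m" "X - Z = 0\<^sub>m n m" shows "X = (Z :: 'a::ab_group_add mat)"
proof (rule eq_matI)
  fix i j assume ij: "i < dim_row Z" "j < dim_col Z"
  have "(X - Z) $$ (i,j) = 0" using assms ij by simp
  thus "X $$ (i,j) = Z $$ (i,j)" using assms(1,2) ij by simp
qed (use assms in auto)

lemma sq_one:
  fixes A :: "'a::field mat"
  assumes A: "A \<in> carrier_mat n n" and h: "(A + 1\<^sub>m n) * (A - 1\<^sub>m n) = 0\<^sub>m n n"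
  shows "A * A = 1\<^sub>m n"
proof -
  have "(A + 1\<^sub>m n) * (A - 1\<^sub>m n) = (A + 1\<^sub>m n) * A - (A + 1\<^sub>m n) * 1\<^sub>m n"
    using A by (simp add: mult_minus_distrib_mat[of _ n n])
  also have "\<dots> = (A * A + A) - (A + 1\<^sub>m n)"
    using A by (simp add: add_mult_distrib_mat[of _ n n])
  also have "\<dots> = A * A - 1\<^sub>m n" using A by (intro grp1) auto
  finally have E: "(A + 1\<^sub>m n) * (A - 1\<^sub>m n) = A * A - 1\<^sub>m n" .
  have Z: "A * A - 1\<^sub>m n = 0\<^sub>m n n" unfolding E[symmetric] by (rule h)
  show ?thesis by (rule grp2[OF _ _ Z]) (use A in auto)
qed

lemma sqc: "A \<in> carrier_mat d d \<Longrightarrow> B \<in> carrier_mat d d \<Longrightarrow> A * B \<in> carrier_mat d d"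
  by auto
lemma sqa: "A \<in> carrier_mat d d \<Longrightarrow> B \<in> carrier_mat d d \<Longrightarrow> C \<in> carrier_mat d d \<Longrightarrow> A * B * C = A * (B * C)"
  by auto

lemma conj_quad:
  fixes A Y :: "'a::field mat"
  assumes A: "A \<in> carrier_mat n n" and Y: "Y \<in> carrier_mat n n" and AA: "A * A = 1\<^sub>m n"
  shows "(A * Y * A + 1\<^sub>m n) * (A * Y * A - q \<cdot>\<^sub>m 1\<^sub>m n) = A * ((Y + 1\<^sub>m n) * (Y - q \<cdot>\<^sub>m 1\<^sub>m n)) * A"
proof -
  have 1: "A * Y * A + 1\<^sub>m n = A * (Y + 1\<^sub>m n) * A"
    using A Y AA by (simp add: mult_add_distrib_mat[of _ n n] add_mult_distrib_mat[of _ n n])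
  have qq: "A * (q \<cdot>\<^sub>m 1\<^sub>m n) * A = q \<cdot>\<^sub>m 1\<^sub>m n"
  proof -
    have "A * (q \<cdot>\<^sub>m 1\<^sub>m n) = q \<cdot>\<^sub>m A" using A by (simp add: mult_smult_distrib[of _ n n _ n])
    moreover have "(q \<cdot>\<^sub>m A) * A = q \<cdot>\<^sub>m (A * A)" using A by (simp add: mult_smult_assoc_mat[of _ n n _ n])
    ultimately show ?thesis using AA by simp
  qed
  have 2: "A * Y * A - q \<cdot>\<^sub>m 1\<^sub>m n = A * (Y - q \<cdot>\<^sub>m 1\<^sub>m n) * A"
    using A Y AA by (simp add: mult_minus_distrib_mat[of _ n n] minus_mult_distrib_mat[of _ n n] qq)
  have 3: "A * X * A * (A * Z * A) = A * (X * Z) * A" if "X \<in> carrier_mat n n" "Z \<in> carrier_mat n n" for X Z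
    using A that AA by (simp add: sqa[of _ n] sqc mm_inv3[OF A _ AA])
  show ?thesis unfolding 1 2 by (rule 3, insert Y, auto)
qed

lemma res_D:
  fixes q :: "'a::field"
  assumes H: "hecke_B_rep q n M" and n: "2 \<le> n"
  shows "hecke_D_rep q n (Res M)"
proof -
  obtain d T where M: "M = (d, T)" by (cases M)
  have C: "\<And>i. i < n \<Longrightarrow> T i \<in> carrier_mat d d" using H M unfolding hecke_B_rep_def Let_def by auto
  have C0: "T 0 \<in> carrier_mat d d" and C1: "T 1 \<in> carrier_mat d d" using C n by auto
  have Q0: "(T 0 + 1\<^sub>m d) * (T 0 - 1\<^sub>m d) = 0\<^sub>m d d" using H M unfolding hecke_B_rep_def Let_def by auto
  have I0: "T 0 * T 0 = 1\<^sub>m d" using sq_one[OF C0 Q0] .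
  have Q: "\<And>i. 1 \<le> i \<Longrightarrow> i \<le> n - 1 \<Longrightarrow> (T i + 1\<^sub>m d) * (T i - q \<cdot>\<^sub>m 1\<^sub>m d) = 0\<^sub>m d d"
    using H M unfolding hecke_B_rep_def Let_def by auto
  have B01: "T 0 * T 1 * T 0 * T 1 = T 1 * T 0 * T 1 * T 0" using H M n unfolding hecke_B_rep_def Let_def by auto
  have Br: "\<And>i. 1 \<le> i \<Longrightarrow> i + 2 \<le> n \<Longrightarrow> T (i+1) * T i * T (i+1) = T i * T (i+1) * T i"
    using H M unfolding hecke_B_rep_def Let_def by auto
  have Co: "\<And>i j. i + 1 < j \<Longrightarrow> j \<le> n - 1 \<Longrightarrow> T i * T j = T j * T i"
    using H M unfolding hecke_B_rep_def Let_def by auto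
  have Cinv: "T 0 * (T 0 * X) = X" if "X \<in> carrier_mat d d" for X
    using mm_inv3[OF C0 _ I0] that by auto
  let ?S = "\<lambda>i. if i = 0 then T 0 * T 1 * T 0 else T i"
  have RM: "Res M = (d, ?S)" unfolding M Res_def prod.sel by (rule refl)
  have a: "\<forall>i<n. ?S i \<in> carrier_mat d d" using C C0 C1 by auto
  have b: "\<forall>i<n. (?S i + 1\<^sub>m d) * (?S i - q \<cdot>\<^sub>m 1\<^sub>m d) = 0\<^sub>m d d"
  proof (intro allI impI)
    fix i assume i: "i < n"
    show "(?S i + 1\<^sub>m d) * (?S i - q \<cdot>\<^sub>m 1\<^sub>m d) = 0\<^sub>m d d"
    proof (cases "i = 0")
      case True
      have "(T 0 * T 1 * T 0 + 1\<^sub>m d) * (T 0 * T 1 * T 0 - q \<cdot>\<^sub>m 1\<^sub>m d) = T 0 * ((T 1 + 1\<^sub>m d) * (T 1 - q \<cdot>\<^sub>m 1\<^sub>m d)) * T 0"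
        by (rule conj_quad[OF C0 C1 I0])
      also have "\<dots> = 0\<^sub>m d d" using Q[of 1] n C0 by simp
      finally show ?thesis using True by simp
    next
      case False thus ?thesis using Q[of i] i by simp
    qed
  qed
  have c: "3 \<le> n \<longrightarrow> ?S 0 * ?S 2 * ?S 0 = ?S 2 * ?S 0 * ?S 2"
  proof
    assume n3: "3 \<le> n"
    have C2: "T 2 \<in> carrier_mat d d" using C n3 by auto
    have c02: "T 0 * T 2 = T 2 * T 0" using Co[of 0 2] n3 by auto
    have c02X: "T 0 * (T 2 * X) = T 2 * (T 0 * X)" if "X \<in> carrier_mat d d" for X
      using mm_comm3[OF C0 C2 _ c02] that by auto
    have b12X: "T 1 * (T 2 * (T 1 * X)) = T 2 * (T 1 * (T 2 * X))" if "X \<in> carrier_mat d d" for X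
    proof -
      have "T 2 * T 1 * T 2 = T 1 * T 2 * T 1" using Br[of 1] n3 by (simp add: numeral_2_eq_2)
      hence "T 2 * T 1 * T 2 * X = T 1 * T 2 * T 1 * X" by simp
      thus ?thesis using C1 C2 that by (simp add: sqa[of _ d] sqc)
    qed
    have "T 0 * T 1 * T 0 * T 2 * (T 0 * T 1 * T 0) = T 0 * (T 1 * (T 0 * (T 2 * (T 0 * (T 1 * T 0)))))"
      using C0 C1 C2 by (simp add: sqa[of _ d] sqc)
    also have "\<dots> = T 0 * (T 1 * (T 2 * (T 1 * T 0)))"
      using C0 C1 C2 by (simp add: c02X Cinv sqc)
    also have "\<dots> = T 0 * (T 2 * (T 1 * (T 2 * T 0)))"
      using b12X[OF C0] by simp
    also have "\<dots> = T 2 * (T 0 * (T 1 * (T 2 * T 0)))"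
      using c02X[of "T 1 * (T 2 * T 0)"] C0 C1 C2 by simp
    also have "\<dots> = T 2 * (T 0 * (T 1 * (T 0 * T 2)))" by (simp only: c02)
    also have "\<dots> = T 2 * (T 0 * T 1 * T 0) * T 2"
      using C0 C1 C2 by (simp add: sqa[of _ d] sqc)
    finally show "?S 0 * ?S 2 * ?S 0 = ?S 2 * ?S 0 * ?S 2" by simp
  qed
  have d: "\<forall>i. 1 \<le> i \<and> i \<le> n - 1 \<and> i \<noteq> 2 \<longrightarrow> ?S 0 * ?S i = ?S i * ?S 0"
  proof (intro allI impI)
    fix i assume i: "1 \<le> i \<and> i \<le> n - 1 \<and> i \<noteq> 2"
    show "?S 0 * ?S i = ?S i * ?S 0"
    proof (cases "i = 1")
      case True thus ?thesis using B01 C0 C1 by (simp add: sqa[of _ d] sqc)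
    next
      case False
      hence i3: "3 \<le> i" using i by auto
      have Ci: "T i \<in> carrier_mat d d" using C i n by auto
      have "T 0 * T i = T i * T 0" using Co[of 0 i] i i3 by auto
      have "T 1 * T i = T i * T 1" using Co[of 1 i] i i3 by auto
      note c0i = \<open>T 0 * T i = T i * T 0\<close> and c1i = \<open>T 1 * T i = T i * T 1\<close>
      have "T 0 * T 1 * T 0 * T i = T 0 * (T 1 * (T 0 * T i))" using C0 C1 Ci by (simp add: sqa[of _ d] sqc)
      also have "\<dots> = T 0 * (T 1 * (T i * T 0))" by (simp only: c0i)
      also have "\<dots> = T 0 * (T i * (T 1 * T 0))" using mm_comm3[OF C1 Ci _ c1i, of "T 0"] C0 by simp
      also have "\<dots> = T i * (T 0 * (T 1 * T 0))" using mm_comm3[OF C0 Ci _ c0i, of "T 1 * T 0"] C0 C1 by simp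
      finally have "T 0 * T 1 * T 0 * T i = T i * (T 0 * T 1 * T 0)" using C0 C1 Ci by (simp add: sqa[of _ d] sqc)
      thus ?thesis using i by simp
    qed
  qed
  have e: "\<forall>i. 1 \<le> i \<and> i + 2 \<le> n \<longrightarrow> ?S (i+1) * ?S i * ?S (i+1) = ?S i * ?S (i+1) * ?S i"
  proof (intro allI impI)
    fix i assume "1 \<le> i \<and> i + 2 \<le> n"
    thus "?S (i+1) * ?S i * ?S (i+1) = ?S i * ?S (i+1) * ?S i" using Br[of i] by simp
  qed
  have f: "\<forall>i j. 1 \<le> i \<and> i + 1 < j \<and> j \<le> n - 1 \<longrightarrow> ?S i * ?S j = ?S j * ?S i"
  proof (intro allI impI)
    fix i j assume "1 \<le> i \<and> i + 1 < j \<and> j \<le> n - 1"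
    thus "?S i * ?S j = ?S j * ?S i" using Co[of i j] by simp
  qed
  show ?thesis unfolding RM hecke_D_rep_def Let_def fst_conv snd_conv
    using a b c d e f by blast
qed


definition bd :: "'a::zero mat \<Rightarrow> 'a mat \<Rightarrow> 'a mat" where
  "bd A B = four_block_mat A (0\<^sub>m (dim_row A) (dim_col B)) (0\<^sub>m (dim_row B) (dim_col A)) B"
definition sw :: "nat \<Rightarrow> 'a::{zero,one} mat" where
  "sw d = four_block_mat (0\<^sub>m d d) (1\<^sub>m d) (1\<^sub>m d) (0\<^sub>m d d)"

lemma bd_carrier[simp,intro]: "A \<in> carrier_mat r c \<Longrightarrow> B \<in> carrier_mat r' c' \<Longrightarrow> bd A B \<in> carrier_mat (r+r') (c+c')"
  unfolding bd_def by auto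
lemma bd_dim[simp]: "dim_row (bd A B) = dim_row A + dim_row B" "dim_col (bd A B) = dim_col A + dim_col B"
  unfolding bd_def by auto
lemma sw_dim[simp]: "dim_row (sw d) = d + d" "dim_col (sw d) = d + d"
  unfolding sw_def by auto
lemma sw_carrier[simp,intro]: "sw d \<in> carrier_mat (d+d) (d+d)"
  unfolding sw_def by auto

lemma bd_mult:
  fixes A :: "'a::semiring_0 mat"
  assumes "A \<in> carrier_mat r k" "B \<in> carrier_mat r' k'" "C \<in> carrier_mat k c" "D \<in> carrier_mat k' c'"
  shows "bd A B * bd C D = bd (A*C) (B*D)"
  unfolding bd_def using assms
  by (subst mult_four_block_mat[of _ r k _ k' _ r' _ _ c _ c'], auto)

lemma bd_add:
  fixes A :: "'a::monoid_add mat"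
  assumes "A \<in> carrier_mat r c" "B \<in> carrier_mat r' c'" "C \<in> carrier_mat r c" "D \<in> carrier_mat r' c'"
  shows "bd A B + bd C D = bd (A+C) (B+D)"
  unfolding bd_def using assms by (intro eq_matI) (auto simp: index_mat_four_block)

lemma bd_minus:
  fixes A :: "'a::group_add mat"
  assumes "A \<in> carrier_mat r c" "B \<in> carrier_mat r' c'" "C \<in> carrier_mat r c" "D \<in> carrier_mat r' c'"
  shows "bd A B - bd C D = bd (A-C) (B-D)"
  unfolding bd_def using assms by (intro eq_matI) (auto simp: index_mat_four_block)

lemma bd_smult:
  fixes A :: "'a::semiring_0 mat"
  assumes "A \<in> carrier_mat r c" "B \<in> carrier_mat r' c'"
  shows "a \<cdot>\<^sub>m bd A B = bd (a \<cdot>\<^sub>m A) (a \<cdot>\<^sub>m B)"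
  unfolding bd_def using assms by (intro eq_matI) (auto simp: index_mat_four_block)

lemma bd_one: "bd (1\<^sub>m d) (1\<^sub>m d') = (1\<^sub>m (d+d') :: 'a::{zero,one} mat)"
  unfolding bd_def by (intro eq_matI) (auto simp: index_mat_four_block)

lemma bd_zero: "bd (0\<^sub>m r c) (0\<^sub>m r' c') = (0\<^sub>m (r+r') (c+c') :: 'a::zero mat)"
  unfolding bd_def by (intro eq_matI) (auto simp: index_mat_four_block)

lemma sw_bd:
  fixes A :: "'a::semiring_1 mat"
  assumes "A \<in> carrier_mat r c" "B \<in> carrier_mat r c"
  shows "sw r * bd A B = bd B A * sw c"
  unfolding bd_def sw_def using assms
  by (subst mult_four_block_mat[of _ r r _ r _ r _ _ c _ c], auto,
      subst mult_four_block_mat[of _ r c _ c _ r _ _ c _ c], auto)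

lemma sw_sq: "sw d * sw d = (1\<^sub>m (d+d) :: 'a::semiring_1 mat)"
  unfolding sw_def
  by (subst mult_four_block_mat[of _ d d _ d _ d _ _ d _ d], auto)

lemma embed00: "C \<in> carrier_mat k c \<Longrightarrow> C = four_block_mat C (0\<^sub>m k 0) (0\<^sub>m 0 c) (0\<^sub>m 0 0)"
  by (intro eq_matI) (auto simp: index_mat_four_block)

lemma stack_mult:
  fixes X :: "'a::semiring_0 mat"
  assumes "X \<in> carrier_mat r k" "Y \<in> carrier_mat r' k" "C \<in> carrier_mat k c"
  shows "(X @\<^sub>r Y) * C = (X*C) @\<^sub>r (Y*C)"
proof -
  have "(X @\<^sub>r Y) * C = four_block_mat X (0\<^sub>m r 0) Y (0\<^sub>m r' 0) * four_block_mat C (0\<^sub>m k 0) (0\<^sub>m 0 c) (0\<^sub>m 0 0)"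
    using assms embed00[OF assms(3)] unfolding append_rows_def by auto
  also have "\<dots> = (X*C) @\<^sub>r (Y*C)" unfolding append_rows_def using assms
    by (subst mult_four_block_mat[of _ r k _ 0 _ r' _ _ c _ 0], auto)
  finally show ?thesis .
qed

lemma bd_stack:
  fixes A :: "'a::semiring_0 mat"
  assumes "A \<in> carrier_mat r k" "B \<in> carrier_mat r' k'" "X \<in> carrier_mat k c" "Y \<in> carrier_mat k' c"
  shows "bd A B * (X @\<^sub>r Y) = (A*X) @\<^sub>r (B*Y)"
  unfolding append_rows_def bd_def using assms
  by (subst mult_four_block_mat[of _ r k _ k' _ r' _ _ c _ 0], auto)

lemma sw_stack:
  fixes X :: "'a::semiring_1 mat"
  assumes "X \<in> carrier_mat d c" "Y \<in> carrier_mat d c"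
  shows "sw d * (X @\<^sub>r Y) = Y @\<^sub>r X"
  unfolding append_rows_def sw_def using assms
  by (subst mult_four_block_mat[of _ d d _ d _ d _ _ c _ 0], auto)

lemma stack_inj:
  assumes "X \<in> carrier_mat r c" "Y \<in> carrier_mat r' c" "X' \<in> carrier_mat r c" "Y' \<in> carrier_mat r' c"
    and eq: "X @\<^sub>r Y = X' @\<^sub>r Y'"
  shows "X = X' \<and> Y = Y'"
proof
  show "X = X'"
  proof (rule eq_matI)
    fix i j assume ij: "i < dim_row X'" "j < dim_col X'"
    have "(X @\<^sub>r Y) $$ (i,j) = (X' @\<^sub>r Y') $$ (i,j)" using eq by simp
    thus "X $$ (i,j) = X' $$ (i,j)" using assms(1-4) ij unfolding append_rows_def by (auto simp: index_mat_four_block)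
  qed (use assms in auto)
  show "Y = Y'"
  proof (rule eq_matI)
    fix i j assume ij: "i < dim_row Y'" "j < dim_col Y'"
    have "(X @\<^sub>r Y) $$ (r+i,j) = (X' @\<^sub>r Y') $$ (r+i,j)" using eq by simp
    thus "Y $$ (i,j) = Y' $$ (i,j)" using assms(1-4) ij unfolding append_rows_def by (auto simp: index_mat_four_block)
  qed (use assms in auto)
qed

lemma stack_split:
  assumes H: "H \<in> carrier_mat (r+r') c"
  shows "\<exists>X Y. X \<in> carrier_mat r c \<and> Y \<in> carrier_mat r' c \<and> H = X @\<^sub>r Y"
proof (intro exI conjI)
  let ?X = "mat r c (\<lambda>(i,j). H $$ (i,j))" and ?Y = "mat r' c (\<lambda>(i,j). H $$ (r+i,j))"
  show "?X \<in> carrier_mat r c" "?Y \<in> carrier_mat r' c" by auto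
  show "H = ?X @\<^sub>r ?Y" using H unfolding append_rows_def
    by (intro eq_matI) (auto simp: index_mat_four_block)
qed



definition Ind :: "'a::field rep \<Rightarrow> 'a rep" where
 "Ind N = (fst N + fst N, \<lambda>i. if i = 0 then sw (fst N) else if i = 1 then bd (snd N 1) (snd N 0)
     else bd (snd N i) (snd N i))"

lemma sq_expand:
  fixes A :: "'a::field mat"
  assumes A: "A \<in> carrier_mat n n"
  shows "(A + 1\<^sub>m n) * (A - 1\<^sub>m n) = A * A - 1\<^sub>m n"
proof -
  have "(A + 1\<^sub>m n) * (A - 1\<^sub>m n) = (A + 1\<^sub>m n) * A - (A + 1\<^sub>m n) * 1\<^sub>m n"
    using A by (simp add: mult_minus_distrib_mat[of _ n n])
  also have "\<dots> = (A * A + A) - (A + 1\<^sub>m n)"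
    using A by (simp add: add_mult_distrib_mat[of _ n n])
  also have "\<dots> = A * A - 1\<^sub>m n" using A by (intro grp1) auto
  finally show ?thesis .
qed

lemma bd_quad:
  fixes A :: "'a::field mat"
  assumes A: "A \<in> carrier_mat d d" and B: "B \<in> carrier_mat d d"
  shows "(bd A B + 1\<^sub>m (d+d)) * (bd A B - q \<cdot>\<^sub>m 1\<^sub>m (d+d)) =
    bd ((A + 1\<^sub>m d) * (A - q \<cdot>\<^sub>m 1\<^sub>m d)) ((B + 1\<^sub>m d) * (B - q \<cdot>\<^sub>m 1\<^sub>m d))"
proof -
  have "bd A B + 1\<^sub>m (d+d) = bd (A + 1\<^sub>m d) (B + 1\<^sub>m d)"
    using A B by (simp add: bd_one[symmetric] bd_add[of _ d d _ d d])
  moreover have "bd A B - q \<cdot>\<^sub>m 1\<^sub>m (d+d) = bd (A - q \<cdot>\<^sub>m 1\<^sub>m d) (B - q \<cdot>\<^sub>m 1\<^sub>m d)"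
    using A B by (simp add: bd_one[symmetric] bd_smult[of _ d d _ d d] bd_minus[of _ d d _ d d])
  moreover have "bd (A + 1\<^sub>m d) (B + 1\<^sub>m d) * bd (A - q \<cdot>\<^sub>m 1\<^sub>m d) (B - q \<cdot>\<^sub>m 1\<^sub>m d) =
    bd ((A + 1\<^sub>m d) * (A - q \<cdot>\<^sub>m 1\<^sub>m d)) ((B + 1\<^sub>m d) * (B - q \<cdot>\<^sub>m 1\<^sub>m d))"
    by (rule bd_mult[of _ d d _ d d _ d _ d]) (use A B in auto)
  ultimately show ?thesis by simp
qed

lemma bd_mult3:
  fixes A :: "'a::field mat"
  assumes "A \<in> carrier_mat d d" "B \<in> carrier_mat d d" "C \<in> carrier_mat d d" "D \<in> carrier_mat d d"
    "E \<in> carrier_mat d d" "F \<in> carrier_mat d d"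
  shows "bd A B * bd C D * bd E F = bd (A*C*E) (B*D*F)"
  using assms by (simp add: bd_mult[of _ d d _ d d _ d _ d])

lemma bd_mult2:
  fixes A :: "'a::field mat"
  assumes "A \<in> carrier_mat d d" "B \<in> carrier_mat d d" "C \<in> carrier_mat d d" "D \<in> carrier_mat d d"
  shows "bd A B * bd C D = bd (A*C) (B*D)"
  using assms by (simp add: bd_mult[of _ d d _ d d _ d _ d])

lemma swconj:
  fixes A :: "'a::field mat"
  assumes A: "A \<in> carrier_mat d d" and B: "B \<in> carrier_mat d d"
  shows "sw d * bd A B * sw d = bd B A"
proof -
  have "sw d * bd A B * sw d = bd B A * sw d * sw d" using A B by (simp add: sw_bd)
  also have "\<dots> = bd B A * (sw d * sw d)" using A B by (simp add: sqa[of _ "d+d"])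
  also have "\<dots> = bd B A" using A B by (simp add: sw_sq)
  finally show ?thesis .
qed

lemma ind_B:
  fixes q :: "'a::field"
  assumes H: "hecke_D_rep q n N" and n: "2 \<le> n"
  shows "hecke_B_rep q n (Ind N)"
proof -
  obtain d S where N: "N = (d, S)" by (cases N)
  have C: "\<And>i. i < n \<Longrightarrow> S i \<in> carrier_mat d d" using H N unfolding hecke_D_rep_def Let_def by auto
  have C0: "S 0 \<in> carrier_mat d d" and C1: "S 1 \<in> carrier_mat d d" using C n by auto
  have Q: "\<And>i. i < n \<Longrightarrow> (S i + 1\<^sub>m d) * (S i - q \<cdot>\<^sub>m 1\<^sub>m d) = 0\<^sub>m d d"
    using H N unfolding hecke_D_rep_def Let_def by auto
  have B02: "3 \<le> n \<Longrightarrow> S 0 * S 2 * S 0 = S 2 * S 0 * S 2" using H N unfolding hecke_D_rep_def Let_def by auto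
  have C0i: "\<And>i. 1 \<le> i \<Longrightarrow> i \<le> n - 1 \<Longrightarrow> i \<noteq> 2 \<Longrightarrow> S 0 * S i = S i * S 0"
    using H N unfolding hecke_D_rep_def Let_def by auto
  have Br: "\<And>i. 1 \<le> i \<Longrightarrow> i + 2 \<le> n \<Longrightarrow> S (i+1) * S i * S (i+1) = S i * S (i+1) * S i"
    using H N unfolding hecke_D_rep_def Let_def by auto
  have Co: "\<And>i j. 1 \<le> i \<Longrightarrow> i + 1 < j \<Longrightarrow> j \<le> n - 1 \<Longrightarrow> S i * S j = S j * S i"
    using H N unfolding hecke_D_rep_def Let_def by auto
  let ?T = "\<lambda>i. if i = 0 then sw d else if i = 1 then bd (S 1) (S 0) else bd (S i) (S i)"
  have IN: "Ind N = (d + d, ?T)" unfolding N Ind_def prod.sel by (rule refl)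
  have a: "\<forall>i<n. ?T i \<in> carrier_mat (d+d) (d+d)" using C C0 C1 by auto
  have b: "(?T 0 + 1\<^sub>m (d+d)) * (?T 0 - 1\<^sub>m (d+d)) = 0\<^sub>m (d+d) (d+d)"
    by (simp add: sq_expand[of _ "d+d"] sw_sq)
  have c: "\<forall>i. 1 \<le> i \<and> i \<le> n - 1 \<longrightarrow> (?T i + 1\<^sub>m (d+d)) * (?T i - q \<cdot>\<^sub>m 1\<^sub>m (d+d)) = 0\<^sub>m (d+d) (d+d)"
  proof (intro allI impI)
    fix i assume i: "1 \<le> i \<and> i \<le> n - 1"
    show "(?T i + 1\<^sub>m (d+d)) * (?T i - q \<cdot>\<^sub>m 1\<^sub>m (d+d)) = 0\<^sub>m (d+d) (d+d)"
    proof (cases "i = 1")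
      case True thus ?thesis using C0 C1 Q[of 0] Q[of 1] n by (simp add: bd_quad bd_zero)
    next
      case False
      have "i < n" "i \<noteq> 0" using i n by auto
      thus ?thesis using False C[of i] Q[of i] by (simp add: bd_quad bd_zero)
    qed
  qed
  have d: "?T 0 * ?T 1 * ?T 0 * ?T 1 = ?T 1 * ?T 0 * ?T 1 * ?T 0"
  proof -
    have c01: "S 0 * S 1 = S 1 * S 0" using C0i[of 1] n by auto
    have "sw d * bd (S 1) (S 0) * sw d * bd (S 1) (S 0) = bd (S 0) (S 1) * bd (S 1) (S 0)"
      using C0 C1 by (simp add: swconj)
    also have "\<dots> = bd (S 0 * S 1) (S 1 * S 0)" by (rule bd_mult2) (use C0 C1 in auto)
    also have "\<dots> = bd (S 1 * S 0) (S 0 * S 1)" by (simp only: c01)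
    also have "\<dots> = bd (S 1) (S 0) * bd (S 0) (S 1)" by (rule bd_mult2[symmetric]) (use C0 C1 in auto)
    also have "\<dots> = bd (S 1) (S 0) * (sw d * bd (S 1) (S 0) * sw d)"
      using C0 C1 by (simp add: swconj)
    also have "\<dots> = bd (S 1) (S 0) * sw d * bd (S 1) (S 0) * sw d"
      using C0 C1 by (simp add: sqa[of _ "d+d"] sqc)
    finally show ?thesis by simp
  qed
  have e: "\<forall>i. 1 \<le> i \<and> i + 2 \<le> n \<longrightarrow> ?T (i+1) * ?T i * ?T (i+1) = ?T i * ?T (i+1) * ?T i"
  proof (intro allI impI)
    fix i assume i: "1 \<le> i \<and> i + 2 \<le> n"
    show "?T (i+1) * ?T i * ?T (i+1) = ?T i * ?T (i+1) * ?T i"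
    proof (cases "i = 1")
      case True
      have n3: "3 \<le> n" using i True by auto
      have C2: "S 2 \<in> carrier_mat d d" using C n3 by auto
      have b1: "S 2 * S 1 * S 2 = S 1 * S 2 * S 1" using Br[of 1] n3 by (simp add: numeral_2_eq_2)
      have b0: "S 2 * S 0 * S 2 = S 0 * S 2 * S 0" using B02 n3 by simp
      have t1: "?T (i+1) = bd (S 2) (S 2)" "?T i = bd (S 1) (S 0)" using True by (auto simp: numeral_2_eq_2)
      have "bd (S 2) (S 2) * bd (S 1) (S 0) * bd (S 2) (S 2) = bd (S 2 * S 1 * S 2) (S 2 * S 0 * S 2)"
        by (rule bd_mult3) (use C0 C1 C2 in auto)
      also have "\<dots> = bd (S 1 * S 2 * S 1) (S 0 * S 2 * S 0)" by (simp only: b1 b0)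
      also have "\<dots> = bd (S 1) (S 0) * bd (S 2) (S 2) * bd (S 1) (S 0)"
        by (rule bd_mult3[symmetric]) (use C0 C1 C2 in auto)
      finally show ?thesis unfolding t1 .
    next
      case False
      have Ci: "S i \<in> carrier_mat d d" "S (i+1) \<in> carrier_mat d d" using C i by auto
      have t1: "?T (i+1) = bd (S (i+1)) (S (i+1))" "?T i = bd (S i) (S i)" using False i by auto
      have b: "S (i+1) * S i * S (i+1) = S i * S (i+1) * S i" using Br[of i] i by auto
      show ?thesis by (simp only: t1 bd_mult3[OF Ci(2) Ci(2) Ci(1) Ci(1) Ci(2) Ci(2)]
          bd_mult3[OF Ci(1) Ci(1) Ci(2) Ci(2) Ci(1) Ci(1)] b)
    qed
  qed
  have f: "\<forall>i j. i + 1 < j \<and> j \<le> n - 1 \<longrightarrow> ?T i * ?T j = ?T j * ?T i"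
  proof (intro allI impI)
    fix i j assume ij: "i + 1 < j \<and> j \<le> n - 1"
    have Cj: "S j \<in> carrier_mat d d" using C ij n by auto
    show "?T i * ?T j = ?T j * ?T i"
    proof (cases "i = 0")
      case True thus ?thesis using ij Cj by (simp add: sw_bd)
    next
      case i0: False
      show ?thesis
      proof (cases "i = 1")
        case True
        have c1: "S 1 * S j = S j * S 1" using Co[of 1 j] ij True by auto
        have c0: "S 0 * S j = S j * S 0" using C0i[of j] ij True by auto
        have t1: "?T i = bd (S 1) (S 0)" "?T j = bd (S j) (S j)" using True ij by auto
        have "bd (S 1) (S 0) * bd (S j) (S j) = bd (S 1 * S j) (S 0 * S j)" by (rule bd_mult2) (use C0 C1 Cj in auto)
        also have "\<dots> = bd (S j * S 1) (S j * S 0)" by (simp only: c1 c0)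
        also have "\<dots> = bd (S j) (S j) * bd (S 1) (S 0)" by (rule bd_mult2[symmetric]) (use C0 C1 Cj in auto)
        finally show ?thesis unfolding t1 .
      next
        case False
        have Ci: "S i \<in> carrier_mat d d" using C ij by auto
        have c: "S i * S j = S j * S i" using Co[of i j] ij i0 by auto
        have t1: "?T i = bd (S i) (S i)" "?T j = bd (S j) (S j)" using False i0 ij by auto
        have "bd (S i) (S i) * bd (S j) (S j) = bd (S i * S j) (S i * S j)" by (rule bd_mult2) (use Ci Cj in auto)
        also have "\<dots> = bd (S j * S i) (S j * S i)" by (simp only: c)
        also have "\<dots> = bd (S j) (S j) * bd (S i) (S i)" by (rule bd_mult2[symmetric]) (use Ci Cj in auto)
        finally show ?thesis unfolding t1 .
      qed
    qed
  qed
  show ?thesis unfolding IN hecke_B_rep_def Let_def fst_conv snd_conv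
    using a b c d e f by auto
qed



lemma bd_surj:
  fixes f :: "'a::field mat"
  assumes f: "f \<in> carrier_mat r c" and s: "surj_mat f"
  shows "surj_mat (bd f f)"
  unfolding surj_mat_def
proof -
  have dr: "dim_row (bd f f) = r + r" "dim_col (bd f f) = c + c" using f by auto
  show "\<forall>w\<in>carrier_vec (dim_row (bd f f)). \<exists>v\<in>carrier_vec (dim_col (bd f f)). bd f f *\<^sub>v v = w"
    unfolding dr all_vec_append
  proof (intro ballI)
    fix w1 w2 :: "'a vec" assume w: "w1 \<in> carrier_vec r" "w2 \<in> carrier_vec r"
    obtain v1 where v1: "v1 \<in> carrier_vec c" "f *\<^sub>v v1 = w1" using s w f unfolding surj_mat_def by fastforce
    obtain v2 where v2: "v2 \<in> carrier_vec c" "f *\<^sub>v v2 = w2" using s w f unfolding surj_mat_def by fastforce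
    have "bd f f *\<^sub>v (v1 @\<^sub>v v2) = (f *\<^sub>v v1 + 0\<^sub>m r c *\<^sub>v v2) @\<^sub>v (0\<^sub>m r c *\<^sub>v v1 + f *\<^sub>v v2)"
      unfolding bd_def using f v1 v2 by (subst four_block_mat_mult_vec[of _ r c _ c _ r]) auto
    also have "\<dots> = w1 @\<^sub>v w2" using v1 v2 f w by auto
    finally show "\<exists>v\<in>carrier_vec (c + c). bd f f *\<^sub>v v = w1 @\<^sub>v w2" using v1 v2 by blast
  qed
qed


lemma res_proj:
  fixes q :: "'a::field"
  assumes P: "projective_rep (hecke_B_rep q n) n PB" and n: "2 \<le> n"
  shows "projective_rep (hecke_D_rep q n) n (Res PB)"
proof -
  obtain dB T where PBd: "PB = (dB, T)" by (cases PB)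
  have HB: "hecke_B_rep q n PB" using P unfolding projective_rep_def by auto
  have CT: "\<And>i. i < n \<Longrightarrow> T i \<in> carrier_mat dB dB" using HB PBd unfolding hecke_B_rep_def Let_def by auto
  have CT0: "T 0 \<in> carrier_mat dB dB" and CT1: "T 1 \<in> carrier_mat dB dB" using CT n by auto
  have Q0: "(T 0 + 1\<^sub>m dB) * (T 0 - 1\<^sub>m dB) = 0\<^sub>m dB dB" using HB PBd unfolding hecke_B_rep_def Let_def by auto
  have I0: "T 0 * T 0 = 1\<^sub>m dB" using sq_one[OF CT0 Q0] .
  have Co: "\<And>i j. i + 1 < j \<Longrightarrow> j \<le> n - 1 \<Longrightarrow> T i * T j = T j * T i"
    using HB PBd unfolding hecke_B_rep_def Let_def by auto
  have RPB: "Res PB = (dB, \<lambda>i. if i = 0 then T 0 * T 1 * T 0 else T i)"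
    unfolding PBd Res_def prod.sel by (rule refl)
  have isr: "hecke_D_rep q n (Res PB)" using res_D[OF HB n] .
  have lift: "\<exists>h. rep_hom n (Res PB) M h \<and> f * h = g"
    if HM: "hecke_D_rep q n M" and HN: "hecke_D_rep q n N" and fh: "rep_hom n M N f"
      and fs: "surj_mat f" and gh: "rep_hom n (Res PB) N g" for M N f g
  proof -
    obtain dM SM where Md: "M = (dM, SM)" by (cases M)
    obtain dN SN where Nd: "N = (dN, SN)" by (cases N)
    have CM: "\<And>i. i < n \<Longrightarrow> SM i \<in> carrier_mat dM dM" using HM Md unfolding hecke_D_rep_def Let_def by auto
    have CN: "\<And>i. i < n \<Longrightarrow> SN i \<in> carrier_mat dN dN" using HN Nd unfolding hecke_D_rep_def Let_def by auto
    have fc: "f \<in> carrier_mat dN dM" using fh Md Nd unfolding rep_hom_def by auto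
    have fcomm: "\<And>i. i < n \<Longrightarrow> f * SM i = SN i * f" using fh Md Nd unfolding rep_hom_def by auto
    have gc: "g \<in> carrier_mat dN dB" using gh RPB Nd unfolding rep_hom_def by auto
    have gall: "\<And>i. i < n \<Longrightarrow> g * (if i = 0 then T 0 * T 1 * T 0 else T i) = SN i * g"
      using gh RPB Nd unfolding rep_hom_def by auto
    have gcomm0: "g * (T 0 * T 1 * T 0) = SN 0 * g" using gall[of 0] n by simp
    have gcomm: "\<And>i. 0 < i \<Longrightarrow> i < n \<Longrightarrow> g * T i = SN i * g" using gh RPB Nd unfolding rep_hom_def by auto
    have IM: "Ind M = (dM + dM, \<lambda>i. if i = 0 then sw dM else if i = 1 then bd (SM 1) (SM 0) else bd (SM i) (SM i))"
      unfolding Md Ind_def prod.sel by (rule refl)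
    have IN: "Ind N = (dN + dN, \<lambda>i. if i = 0 then sw dN else if i = 1 then bd (SN 1) (SN 0) else bd (SN i) (SN i))"
      unfolding Nd Ind_def prod.sel by (rule refl)
    let ?F = "bd f f"
    let ?G = "g @\<^sub>r (g * T 0)"
    have Fh: "rep_hom n (Ind M) (Ind N) ?F"
      unfolding rep_hom_def IM IN fst_conv snd_conv
    proof (intro conjI allI impI)
      show "?F \<in> carrier_mat (dN + dN) (dM + dM)" using fc by auto
      fix i assume i: "i < n"
      show "?F * (if i = 0 then sw dM else if i = 1 then bd (SM 1) (SM 0) else bd (SM i) (SM i)) =
        (if i = 0 then sw dN else if i = 1 then bd (SN 1) (SN 0) else bd (SN i) (SN i)) * ?F"
      proof (cases "i = 0")
        case True thus ?thesis using sw_bd[OF fc fc] by simp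
      next
        case False
        show ?thesis
        proof (cases "i = 1")
          case True
          have "bd f f * bd (SM 1) (SM 0) = bd (f * SM 1) (f * SM 0)"
            using fc CM[of 0] CM[of 1] n by (intro bd_mult[of _ dN dM _ dN dM _ dM _ dM]) auto
          also have "\<dots> = bd (SN 1 * f) (SN 0 * f)" using fcomm[of 0] fcomm[of 1] n by simp
          also have "\<dots> = bd (SN 1) (SN 0) * bd f f"
            using fc CN[of 0] CN[of 1] n by (intro bd_mult[of _ dN dN _ dN dN _ dM _ dM, symmetric]) auto
          finally show ?thesis using True by simp
        next
          case False2: False
          have "bd f f * bd (SM i) (SM i) = bd (f * SM i) (f * SM i)"
            using fc CM[of i] i by (intro bd_mult[of _ dN dM _ dN dM _ dM _ dM]) auto
          also have "\<dots> = bd (SN i * f) (SN i * f)" using fcomm[of i] i by simp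
          also have "\<dots> = bd (SN i) (SN i) * bd f f"
            using fc CN[of i] i by (intro bd_mult[of _ dN dN _ dN dN _ dM _ dM, symmetric]) auto
          finally show ?thesis using False False2 by simp
        qed
      qed
    qed
    have Fs: "surj_mat ?F" by (rule bd_surj[OF fc fs])
    have gT0c: "g * T 0 \<in> carrier_mat dN dB" using gc CT0 by auto
    have Gh: "rep_hom n PB (Ind N) ?G"
      unfolding rep_hom_def IN PBd fst_conv snd_conv
    proof (intro conjI allI impI)
      show "?G \<in> carrier_mat (dN + dN) dB" using gc gT0c by auto
      fix i assume i: "i < n"
      have Ti: "T i \<in> carrier_mat dB dB" using CT i .
      have GT: "?G * T i = (g * T i) @\<^sub>r (g * T 0 * T i)" by (rule stack_mult[OF gc gT0c Ti])
      show "?G * T i = (if i = 0 then sw dN else if i = 1 then bd (SN 1) (SN 0) else bd (SN i) (SN i)) * ?G"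
      proof (cases "i = 0")
        case True
        have "g * T 0 * T 0 = g" using gc CT0 I0 by (simp add: assoc_mult_mat[of g dN dB _ dB _ dB])
        hence "?G * T i = (g * T 0) @\<^sub>r g" using GT True by simp
        also have "\<dots> = sw dN * ?G" by (rule sw_stack[symmetric, OF gc gT0c])
        finally show ?thesis using True by simp
      next
        case False
        show ?thesis
        proof (cases "i = 1")
          case True
          have e1: "g * T 1 = SN 1 * g" using gcomm[of 1] n by auto
          have "g * T 0 * T 1 = g * (T 0 * T 1 * T 0) * T 0"
          proof -
            have "g * (T 0 * T 1 * T 0) * T 0 = g * (T 0 * (T 1 * (T 0 * T 0)))"
              using gc CT0 CT1 by (simp add: assoc_mult_mat[of g dN dB _ dB _ dB] sqa[of _ dB] sqc)
            also have "\<dots> = g * T 0 * T 1" using gc CT0 CT1 I0 by (simp add: assoc_mult_mat[of g dN dB _ dB _ dB])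
            finally show ?thesis by simp
          qed
          also have "\<dots> = SN 0 * g * T 0" using gcomm0 by simp
          also have "\<dots> = SN 0 * (g * T 0)" using gc CT0 CN[of 0] n by (simp add: assoc_mult_mat[of _ dN dN g dB _ dB])
          finally have e2: "g * T 0 * T 1 = SN 0 * (g * T 0)" .
          have "?G * T i = (SN 1 * g) @\<^sub>r (SN 0 * (g * T 0))" using GT True e1 e2 by simp
          also have "\<dots> = bd (SN 1) (SN 0) * ?G"
            by (rule bd_stack[symmetric], insert CN[of 0] CN[of 1] n gc gT0c, auto)
          finally show ?thesis using True by simp
        next
          case False2: False
          have e1: "g * T i = SN i * g" using gcomm[of i] i False by auto
          have c0i: "T 0 * T i = T i * T 0" using Co[of 0 i] i False False2 by auto
          have "g * T 0 * T i = g * (T 0 * T i)" using gc CT0 Ti by (simp add: assoc_mult_mat[of g dN dB _ dB _ dB])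
          also have "\<dots> = g * (T i * T 0)" by (simp only: c0i)
          also have "\<dots> = g * T i * T 0" using gc CT0 Ti by (simp add: assoc_mult_mat[of g dN dB _ dB _ dB])
          also have "\<dots> = SN i * g * T 0" by (simp only: e1)
          also have "\<dots> = SN i * (g * T 0)" using gc CT0 CN[of i] i by (simp add: assoc_mult_mat[of _ dN dN g dB _ dB])
          finally have e2: "g * T 0 * T i = SN i * (g * T 0)" .
          have "?G * T i = (SN i * g) @\<^sub>r (SN i * (g * T 0))" using GT e1 e2 by simp
          also have "\<dots> = bd (SN i) (SN i) * ?G"
            by (rule bd_stack[symmetric], insert CN[of i] i gc gT0c, auto)
          finally show ?thesis using False False2 by simp
        qed
      qed
    qed
    have IMB: "hecke_B_rep q n (Ind M)" using ind_B[OF HM n] .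
    have INB: "hecke_B_rep q n (Ind N)" using ind_B[OF HN n] .
    obtain H where Hh: "rep_hom n PB (Ind M) H" and FH: "?F * H = ?G"
      using P IMB INB Fh Fs Gh unfolding projective_rep_def by blast
    have Hc: "H \<in> carrier_mat (dM + dM) dB" using Hh IM PBd unfolding rep_hom_def by auto
    obtain X Y where Xc: "X \<in> carrier_mat dM dB" and Yc: "Y \<in> carrier_mat dM dB" and HXY: "H = X @\<^sub>r Y"
      using stack_split[OF Hc] by blast
    have Hcomm: "\<And>i. i < n \<Longrightarrow> H * T i = (if i = 0 then sw dM else if i = 1 then bd (SM 1) (SM 0) else bd (SM i) (SM i)) * H"
      using Hh IM PBd unfolding rep_hom_def by auto
    have EF: "(f * X) @\<^sub>r (f * Y) = g @\<^sub>r (g * T 0)"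
      using FH unfolding HXY by (subst bd_stack[symmetric, OF fc fc Xc Yc])
    have "f * X = g \<and> f * Y = g * T 0"
      by (rule stack_inj[of "f * X" dN dB "f * Y" dN, OF _ _ _ _ EF]) (use fc Xc Yc gc gT0c in auto)
    hence fX: "f * X = g" by simp
    have XT: "X * T i = SM i * X" if "0 < i" "i < n" for i
    proof -
      define s where "s = (if i = 1 then 0 else i)"
      have s: "s < n" using that n unfolding s_def by auto
      have Ti: "T i \<in> carrier_mat dB dB" using CT that by auto
      have "(X * T i) @\<^sub>r (Y * T i) = H * T i" unfolding HXY by (rule stack_mult[symmetric, OF Xc Yc Ti])
      also have "\<dots> = bd (SM i) (SM s) * H" using Hcomm[of i] that unfolding s_def by auto
      also have "\<dots> = (SM i * X) @\<^sub>r (SM s * Y)"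
        unfolding HXY using CM[of s] CM[of i] that s Xc Yc by (auto intro!: bd_stack)
      finally have E: "(X * T i) @\<^sub>r (Y * T i) = (SM i * X) @\<^sub>r (SM s * Y)" .
      have "X * T i = SM i * X \<and> Y * T i = SM s * Y"
        by (rule stack_inj[of "X * T i" dM dB "Y * T i" dM, OF _ _ _ _ E]) (use Xc Yc Ti CM[of s] CM[of i] that s in auto)
      thus ?thesis by simp
    qed
    have YT1: "Y * T 1 = SM 0 * Y"
    proof -
      have "(X * T 1) @\<^sub>r (Y * T 1) = H * T 1" unfolding HXY by (rule stack_mult[symmetric, OF Xc Yc CT1])
      also have "\<dots> = bd (SM 1) (SM 0) * H" using Hcomm[of 1] n by simp
      also have "\<dots> = (SM 1 * X) @\<^sub>r (SM 0 * Y)"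
        unfolding HXY using CM[of 0] CM[of 1] n Xc Yc by (auto intro!: bd_stack)
      finally have E: "(X * T 1) @\<^sub>r (Y * T 1) = (SM 1 * X) @\<^sub>r (SM 0 * Y)" .
      have "X * T 1 = SM 1 * X \<and> Y * T 1 = SM 0 * Y"
        by (rule stack_inj[of "X * T 1" dM dB "Y * T 1" dM, OF _ _ _ _ E]) (use Xc Yc CT1 CM[of 0] CM[of 1] n in auto)
      thus ?thesis by simp
    qed
    have XT0: "X * T 0 = Y \<and> Y * T 0 = X"
    proof -
      have "(X * T 0) @\<^sub>r (Y * T 0) = H * T 0" unfolding HXY by (rule stack_mult[symmetric, OF Xc Yc CT0])
      also have "\<dots> = sw dM * H" using Hcomm[of 0] n by simp
      also have "\<dots> = Y @\<^sub>r X" unfolding HXY by (rule sw_stack[OF Xc Yc])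
      finally have E: "(X * T 0) @\<^sub>r (Y * T 0) = Y @\<^sub>r X" .
      show ?thesis by (rule stack_inj[of "X * T 0" dM dB "Y * T 0" dM, OF _ _ _ _ E]) (use Xc Yc CT0 in auto)
    qed
    have X0: "X * (T 0 * T 1 * T 0) = SM 0 * X"
    proof -
      have "X * (T 0 * T 1 * T 0) = X * T 0 * T 1 * T 0"
        using Xc CT0 CT1 by (simp add: assoc_mult_mat[of X dM dB _ dB _ dB] sqa[of _ dB] sqc)
      also have "\<dots> = SM 0 * Y * T 0" using XT0 YT1 by simp
      also have "\<dots> = SM 0 * (Y * T 0)" using Yc CT0 CM[of 0] n by (simp add: assoc_mult_mat[of _ dM dM Y dB _ dB])
      also have "\<dots> = SM 0 * X" using XT0 by simp
      finally show ?thesis .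
    qed
    have "rep_hom n (Res PB) M X"
      unfolding rep_hom_def RPB Md fst_conv snd_conv
      using Xc X0 XT by auto
    thus ?thesis using fX by blast
  qed
  show ?thesis unfolding projective_rep_def using isr lift by blast
qed



lemma surj_right_inv:
  fixes A :: "'a::field mat"
  assumes A: "A \<in> carrier_mat r c" and s: "surj_mat A"
  shows "\<exists>R \<in> carrier_mat c r. A * R = 1\<^sub>m r"
proof -
  have "\<forall>j. \<exists>v. j < r \<longrightarrow> v \<in> carrier_vec c \<and> A *\<^sub>v v = unit_vec r j"
    using s A unfolding surj_mat_def by auto
  then obtain V where V: "\<And>j. j < r \<Longrightarrow> V j \<in> carrier_vec c \<and> A *\<^sub>v V j = unit_vec r j" by metis
  let ?R = "mat c r (\<lambda>(i,j). V j $ i)"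
  have colR: "col ?R j = V j" if "j < r" for j
    using V[OF that] that by (intro eq_vecI) auto
  have "A * ?R = 1\<^sub>m r"
  proof (rule eq_matI)
    fix i j assume ij: "i < dim_row (1\<^sub>m r :: 'a mat)" "j < dim_col (1\<^sub>m r :: 'a mat)"
    have "(A * ?R) $$ (i,j) = row A i \<bullet> col ?R j" using ij A by simp
    also have "\<dots> = row A i \<bullet> V j" using colR ij by simp
    also have "\<dots> = (A *\<^sub>v V j) $ i" using ij A by simp
    also have "\<dots> = unit_vec r j $ i" using V ij by simp
    also have "\<dots> = (1\<^sub>m r :: 'a mat) $$ (i,j)" using ij by (simp add: unit_vec_def)
    finally show "(A * ?R) $$ (i,j) = (1\<^sub>m r :: 'a mat) $$ (i,j)" .
  qed (use A in auto)
  thus ?thesis by (intro bexI[of _ ?R]) auto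
qed

lemma surj_comp:
  fixes A B :: "'a::field mat"
  assumes A: "A \<in> carrier_mat r k" and B: "B \<in> carrier_mat k c" and sA: "surj_mat A" and sB: "surj_mat B"
  shows "surj_mat (A * B)"
  unfolding surj_mat_def
proof
  fix w :: "'a vec" assume w: "w \<in> carrier_vec (dim_row (A * B))"
  obtain u where u: "u \<in> carrier_vec k" "A *\<^sub>v u = w" using sA A w unfolding surj_mat_def by auto
  obtain v where v: "v \<in> carrier_vec c" "B *\<^sub>v v = u" using sB B u unfolding surj_mat_def by auto
  have "(A * B) *\<^sub>v v = w" using A B u v by simp
  thus "\<exists>v\<in>carrier_vec (dim_col (A * B)). A * B *\<^sub>v v = w" using v B by auto
qed

lemma inv_of_surjs:
  fixes h g :: "'a::field mat"
  assumes h: "h \<in> carrier_mat a b" and g: "g \<in> carrier_mat b a" and sh: "surj_mat h" and sg: "surj_mat g"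
  shows "\<exists>k \<in> carrier_mat b a. k * h = 1\<^sub>m b \<and> h * k = 1\<^sub>m a"
proof -
  have gh: "g * h \<in> carrier_mat b b" and hg: "h * g \<in> carrier_mat a a" using g h by auto
  obtain R1 where R1: "R1 \<in> carrier_mat b b" "(g * h) * R1 = 1\<^sub>m b"
    using surj_right_inv[OF gh surj_comp[OF g h sg sh]] by blast
  obtain R2 where R2: "R2 \<in> carrier_mat a a" "(h * g) * R2 = 1\<^sub>m a"
    using surj_right_inv[OF hg surj_comp[OF h g sh sg]] by blast
  have L: "R1 * (g * h) = 1\<^sub>m b" using mat_mult_left_right_inverse[OF gh R1(1) R1(2)] .
  have Lh: "(R1 * g) * h = 1\<^sub>m b" using L R1(1) g h by (simp add: assoc_mult_mat[of R1 b b g a h b])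
  have "h * (g * R2) = (h * g) * R2" using h g R2(1) by (rule assoc_mult_mat[symmetric])
  hence hR: "h * (g * R2) = 1\<^sub>m a" using R2(2) by simp
  have "R1 * g = (R1 * g) * 1\<^sub>m a" using R1 g by simp
  also have "\<dots> = (R1 * g) * (h * (g * R2))" by (simp only: hR)
  also have "\<dots> = ((R1 * g) * h) * (g * R2)"
    by (rule assoc_mult_mat[symmetric]) (use R1 g h R2 in auto)
  also have "\<dots> = g * R2" using Lh g R2 by simp
  finally have eq: "R1 * g = g * R2" .
  show ?thesis using Lh hR eq g R2 by (intro bexI[of _ "g * R2"]) auto
qed

lemma vec_add_diff: "u \<in> carrier_vec n \<Longrightarrow> x \<in> carrier_vec n \<Longrightarrow> u + (x - u) = (x :: 'a::ab_group_add vec)"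
  by (intro eq_vecI) auto

lemma cover_hom_surj:
  fixes h :: "'a::field mat"
  assumes hh: "rep_hom n P Q h" and pP: "rep_hom n P S pP" and pQ: "rep_hom n Q S pQ"
    and spP: "surj_mat pP" and comp: "pQ * h = pP"
    and CP: "\<And>i. i < n \<Longrightarrow> snd P i \<in> carrier_mat (fst P) (fst P)"
    and CQ: "\<And>i. i < n \<Longrightarrow> snd Q i \<in> carrier_mat (fst Q) (fst Q)"
    and sup: "\<forall>U. submodule n Q U \<and>
             {u + k | u k. u \<in> U \<and> k \<in> carrier_vec (fst Q) \<and> pQ *\<^sub>v k = 0\<^sub>v (fst S)}
               = carrier_vec (fst Q)
             \<longrightarrow> U = carrier_vec (fst Q)"
  shows "surj_mat h"
proof -
  have hc: "h \<in> carrier_mat (fst Q) (fst P)" using hh unfolding rep_hom_def by auto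
  have pPc: "pP \<in> carrier_mat (fst S) (fst P)" using pP unfolding rep_hom_def by auto
  have pQc: "pQ \<in> carrier_mat (fst S) (fst Q)" using pQ unfolding rep_hom_def by auto
  have hcomm: "\<And>i. i < n \<Longrightarrow> h * snd P i = snd Q i * h" using hh unfolding rep_hom_def by auto
  define U where "U = {h *\<^sub>v v | v. v \<in> carrier_vec (fst P)}"
  have sub: "submodule n Q U" unfolding submodule_def
  proof (intro conjI ballI allI impI)
    show "U \<subseteq> carrier_vec (fst Q)" unfolding U_def using hc by auto
    show "0\<^sub>v (fst Q) \<in> U" unfolding U_def using hc
      by (intro CollectI exI[of _ "0\<^sub>v (fst P)"]) auto
    fix u assume u: "u \<in> U"
    then obtain v where v: "v \<in> carrier_vec (fst P)" "u = h *\<^sub>v v" unfolding U_def by auto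
    { fix w assume "w \<in> U"
      then obtain v' where v': "v' \<in> carrier_vec (fst P)" "w = h *\<^sub>v v'" unfolding U_def by auto
      have "u + w = h *\<^sub>v (v + v')" using v v' hc by (simp add: mult_add_distrib_mat_vec)
      thus "u + w \<in> U" unfolding U_def using v v' by auto }
    { fix c
      have "c \<cdot>\<^sub>v u = h *\<^sub>v (c \<cdot>\<^sub>v v)" using v hc by (simp add: mult_mat_vec)
      thus "c \<cdot>\<^sub>v u \<in> U" unfolding U_def using v by auto }
    { fix i assume i: "i < n"
      have "snd Q i *\<^sub>v u = (snd Q i * h) *\<^sub>v v" using v hc CQ[OF i] by simp
      also have "\<dots> = (h * snd P i) *\<^sub>v v" using hcomm[OF i] by simp
      also have "\<dots> = h *\<^sub>v (snd P i *\<^sub>v v)" using v hc CP[OF i] by simp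
      finally show "snd Q i *\<^sub>v u \<in> U" unfolding U_def using v CP[OF i] by auto }
  qed
  have sum: "{u + k | u k. u \<in> U \<and> k \<in> carrier_vec (fst Q) \<and> pQ *\<^sub>v k = 0\<^sub>v (fst S)} = carrier_vec (fst Q)"
  proof
    show "{u + k | u k. u \<in> U \<and> k \<in> carrier_vec (fst Q) \<and> pQ *\<^sub>v k = 0\<^sub>v (fst S)} \<subseteq> carrier_vec (fst Q)"
      unfolding U_def using hc by auto
    show "carrier_vec (fst Q) \<subseteq> {u + k | u k. u \<in> U \<and> k \<in> carrier_vec (fst Q) \<and> pQ *\<^sub>v k = 0\<^sub>v (fst S)}"
    proof
      fix x :: "'a vec" assume x: "x \<in> carrier_vec (fst Q)"
      have "pQ *\<^sub>v x \<in> carrier_vec (dim_row pP)" using pQc pPc x by auto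
      then obtain v where v: "v \<in> carrier_vec (fst P)" "pP *\<^sub>v v = pQ *\<^sub>v x"
        using spP pPc unfolding surj_mat_def by fastforce
      have hv: "h *\<^sub>v v \<in> carrier_vec (fst Q)" using hc v by auto
      have "pQ *\<^sub>v (x - h *\<^sub>v v) = pQ *\<^sub>v x - pQ *\<^sub>v (h *\<^sub>v v)"
        using pQc x hv by (simp add: mult_minus_distrib_mat_vec)
      also have "pQ *\<^sub>v (h *\<^sub>v v) = (pQ * h) *\<^sub>v v" using pQc hc v(1) by (rule assoc_mult_mat_vec[symmetric])
      also have "\<dots> = pP *\<^sub>v v" using comp by simp
      finally have k0: "pQ *\<^sub>v (x - h *\<^sub>v v) = 0\<^sub>v (fst S)" using v pQc x by auto
      have "x = h *\<^sub>v v + (x - h *\<^sub>v v)" using vec_add_diff[OF hv x] by simp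
      moreover have "h *\<^sub>v v \<in> U" unfolding U_def using v by auto
      moreover have "x - h *\<^sub>v v \<in> carrier_vec (fst Q)" using x hv by auto
      ultimately show "x \<in> {u + k | u k. u \<in> U \<and> k \<in> carrier_vec (fst Q) \<and> pQ *\<^sub>v k = 0\<^sub>v (fst S)}"
        using k0 by blast
    qed
  qed
  have UC: "U = carrier_vec (fst Q)" using sup sub sum by blast
  show ?thesis unfolding surj_mat_def
  proof
    fix w :: "'a vec" assume "w \<in> carrier_vec (dim_row h)"
    hence "w \<in> U" using UC hc by auto
    then obtain v where "v \<in> carrier_vec (fst P)" "w = h *\<^sub>v v" unfolding U_def by auto
    thus "\<exists>v\<in>carrier_vec (dim_col h). h *\<^sub>v v = w" using hc by auto
  qed
qed

lemma covers_iso: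
  fixes P Q S :: "'a::field rep"
  assumes cP: "projective_cover isrep n P S" and cQ: "projective_cover isrep n Q S"
    and CP: "\<And>i. i < n \<Longrightarrow> snd P i \<in> carrier_mat (fst P) (fst P)"
    and CQ: "\<And>i. i < n \<Longrightarrow> snd Q i \<in> carrier_mat (fst Q) (fst Q)"
  shows "rep_iso n P Q"
proof -
  obtain pP where pP: "rep_hom n P S pP" "surj_mat pP" and supP: "\<forall>U. submodule n P U \<and>
             {u + k | u k. u \<in> U \<and> k \<in> carrier_vec (fst P) \<and> pP *\<^sub>v k = 0\<^sub>v (fst S)}
               = carrier_vec (fst P)
             \<longrightarrow> U = carrier_vec (fst P)"
    using cP unfolding projective_cover_def by blast
  obtain pQ where pQ: "rep_hom n Q S pQ" "surj_mat pQ" and supQ: "\<forall>U. submodule n Q U \<and>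
             {u + k | u k. u \<in> U \<and> k \<in> carrier_vec (fst Q) \<and> pQ *\<^sub>v k = 0\<^sub>v (fst S)}
               = carrier_vec (fst Q)
             \<longrightarrow> U = carrier_vec (fst Q)"
    using cQ unfolding projective_cover_def by blast
  have prP: "projective_rep isrep n P" and prQ: "projective_rep isrep n Q" and iS: "isrep S"
    using cP cQ unfolding projective_cover_def by auto
  have iP: "isrep P" and iQ: "isrep Q" using prP prQ unfolding projective_rep_def by auto
  obtain h where hh: "rep_hom n P Q h" and hc: "pQ * h = pP"
    using prP iQ iS pQ pP unfolding projective_rep_def by blast
  obtain g where gh: "rep_hom n Q P g" and gc: "pP * g = pQ"
    using prQ iP iS pQ pP unfolding projective_rep_def by blast
  have sh: "surj_mat h" by (rule cover_hom_surj[OF hh pP(1) pQ(1) pP(2) hc CP CQ supQ])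
  have sg: "surj_mat g" by (rule cover_hom_surj[OF gh pQ(1) pP(1) pQ(2) gc CQ CP supP])
  have hC: "h \<in> carrier_mat (fst Q) (fst P)" using hh unfolding rep_hom_def by auto
  have gC: "g \<in> carrier_mat (fst P) (fst Q)" using gh unfolding rep_hom_def by auto
  obtain k where kC: "k \<in> carrier_mat (fst P) (fst Q)" and kh: "k * h = 1\<^sub>m (fst P)" and hk: "h * k = 1\<^sub>m (fst Q)"
    using inv_of_surjs[OF hC gC sh sg] by blast
  have hcomm: "\<And>i. i < n \<Longrightarrow> h * snd P i = snd Q i * h" using hh unfolding rep_hom_def by auto
  have "rep_hom n Q P k" unfolding rep_hom_def
  proof (intro conjI allI impI)
    show "k \<in> carrier_mat (fst P) (fst Q)" by (rule kC)
    fix i assume i: "i < n"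
    note Pi = CP[OF i] and Qi = CQ[OF i]
    have kQ: "k * snd Q i \<in> carrier_mat (fst P) (fst Q)" using kC Qi by auto
    have "k * snd Q i = k * snd Q i * (h * k)" using kC Qi hk by simp
    also have "\<dots> = (k * snd Q i * h) * k" using kQ hC kC by (rule assoc_mult_mat[symmetric])
    also have "k * snd Q i * h = k * (snd Q i * h)" using kC Qi hC by (rule assoc_mult_mat)
    also have "\<dots> = k * (h * snd P i)" using hcomm[OF i] by simp
    also have "\<dots> = (k * h) * snd P i" using kC hC Pi by (rule assoc_mult_mat[symmetric])
    also have "\<dots> = snd P i" using kh Pi by simp
    finally show "k * snd Q i = snd P i * k" .
  qed
  thus ?thesis unfolding rep_iso_def using hh kh hk by blast
qed



lemma two_nz:
  fixes q :: "'a::field"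
  assumes pr: "primitive_root_of_unity q e" and ev: "even e" and e2: "e \<ge> 2"
  shows "(2::'a) \<noteq> 0"
proof
  assume two: "(2::'a) = 0"
  obtain m where m: "e = 2 * m" using ev by auto
  have m0: "0 < m" "m < e" using m e2 by auto
  let ?h = "q ^ m"
  have hne: "?h \<noteq> 1" using pr m0 unfolding primitive_root_of_unity_def by auto
  have hh: "?h * ?h = 1" using pr m unfolding primitive_root_of_unity_def by (simp add: power_add[symmetric] mult_2)
  have "(?h - 1) * (?h - 1) = ?h * ?h - 2 * ?h + 1" by (simp add: algebra_simps)
  also have "\<dots> = 2 * (1 - ?h)" unfolding hh by (simp add: algebra_simps)
  also have "\<dots> = 0" using two by simp
  finally have "(?h - 1) * (?h - 1) = 0" .
  hence "?h = 1" by simp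
  thus False using hne by simp
qed

definition mone :: "'a::field mat" where "mone = mat 1 1 (\<lambda>_. -1)"

lemma sign_rep_snd: "snd sign_rep i = mone" "fst sign_rep = 1"
  unfolding sign_rep_def mone_def by auto

lemma mone_carrier[simp]: "mone \<in> carrier_mat 1 1" unfolding mone_def by auto

lemma mone_sq: "mone * mone = (1\<^sub>m 1 :: 'a::field mat)"
  unfolding mone_def by (intro eq_matI) (auto simp: scalar_prod_def)

lemma sign_D: "hecke_D_rep q n (sign_rep :: 'a::field rep)"
proof -
  have "(mone + 1\<^sub>m 1) = (0\<^sub>m 1 1 :: 'a mat)" unfolding mone_def by (intro eq_matI) auto
  hence q: "(mone + 1\<^sub>m 1) * (mone - q \<cdot>\<^sub>m 1\<^sub>m 1) = (0\<^sub>m 1 1 :: 'a mat)" by simp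
  show ?thesis unfolding hecke_D_rep_def Let_def sign_rep_snd using q by (auto simp: mone_def)
qed

lemma mone_vec: "v \<in> carrier_vec 1 \<Longrightarrow> (mone *\<^sub>v v) $ 0 = - (v $ 0 :: 'a::field)"
  unfolding mone_def by (auto simp: scalar_prod_def)

lemma mat_zero_vec: "(A :: 'a::field mat) \<in> carrier_mat n n \<Longrightarrow> A *\<^sub>v 0\<^sub>v n = 0\<^sub>v n"
  by (intro eq_vecI) auto

lemma rassoc4:
  fixes A :: "'a::field mat"
  assumes "X \<in> carrier_mat r d" "A \<in> carrier_mat d d" "B \<in> carrier_mat d d" "C \<in> carrier_mat d d"
  shows "X * (A * B * C) = X * A * B * C"
proof -
  have AB: "A * B \<in> carrier_mat d d" using assms by auto
  have "X * (A * B * C) = X * (A * B) * C" by (rule assoc_mult_mat[symmetric, OF assms(1) AB assms(4)])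
  also have "X * (A * B) = X * A * B" by (rule assoc_mult_mat[symmetric, OF assms(1) assms(2) assms(3)])
  finally show ?thesis .
qed

lemma mvec3:
  fixes A :: "'a::field mat"
  assumes "A \<in> carrier_mat d d" "B \<in> carrier_mat d d" "C \<in> carrier_mat d d" "u \<in> carrier_vec d"
  shows "(A * B * C) *\<^sub>v u = A *\<^sub>v (B *\<^sub>v (C *\<^sub>v u))"
proof -
  have AB: "A * B \<in> carrier_mat d d" using assms by auto
  have Cu: "C *\<^sub>v u \<in> carrier_vec d" using assms by auto
  have "(A * B * C) *\<^sub>v u = (A * B) *\<^sub>v (C *\<^sub>v u)" by (rule assoc_mult_mat_vec[OF AB assms(3,4)])
  also have "\<dots> = A *\<^sub>v (B *\<^sub>v (C *\<^sub>v u))" by (rule assoc_mult_mat_vec[OF assms(1,2) Cu])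
  finally show ?thesis .
qed

lemma res_cover:
  fixes q :: "'a::field"
  assumes cB: "projective_cover (hecke_B_rep q n) n PB sign_rep" and n: "2 \<le> n" and two: "(2::'a) \<noteq> 0"
  shows "projective_cover (hecke_D_rep q n) n (Res PB) sign_rep"
proof -
  obtain dB T where PBd: "PB = (dB, T)" by (cases PB)
  have prB: "projective_rep (hecke_B_rep q n) n PB" using cB unfolding projective_cover_def by auto
  have HB: "hecke_B_rep q n PB" using prB unfolding projective_rep_def by auto
  have CT: "\<And>i. i < n \<Longrightarrow> T i \<in> carrier_mat dB dB" using HB PBd unfolding hecke_B_rep_def Let_def by auto
  have CT0: "T 0 \<in> carrier_mat dB dB" and CT1: "T 1 \<in> carrier_mat dB dB" using CT n by auto
  have Q0: "(T 0 + 1\<^sub>m dB) * (T 0 - 1\<^sub>m dB) = 0\<^sub>m dB dB" using HB PBd unfolding hecke_B_rep_def Let_def by auto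
  have I0: "T 0 * T 0 = 1\<^sub>m dB" using sq_one[OF CT0 Q0] .
  have Co: "\<And>i j. i + 1 < j \<Longrightarrow> j \<le> n - 1 \<Longrightarrow> T i * T j = T j * T i"
    using HB PBd unfolding hecke_B_rep_def Let_def by auto
  have RPB: "Res PB = (dB, \<lambda>i. if i = 0 then T 0 * T 1 * T 0 else T i)"
    unfolding PBd Res_def prod.sel by (rule refl)
  obtain pm where pmh: "rep_hom n PB sign_rep pm" and pms: "surj_mat pm" and supB: "\<forall>U. submodule n PB U \<and>
             {u + k | u k. u \<in> U \<and> k \<in> carrier_vec (fst PB) \<and> pm *\<^sub>v k = 0\<^sub>v (fst (sign_rep :: 'a rep))}
               = carrier_vec (fst PB)
             \<longrightarrow> U = carrier_vec (fst PB)"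
    using cB[unfolded projective_cover_def, THEN conjunct2, THEN conjunct2] by (elim exE conjE) (rule that, assumption+)
  have pmc: "pm \<in> carrier_mat 1 dB" using pmh PBd unfolding rep_hom_def sign_rep_snd by auto
  have pmT: "\<And>i. i < n \<Longrightarrow> pm * T i = mone * pm" using pmh PBd unfolding rep_hom_def sign_rep_snd by auto
  define p where "p x = (pm *\<^sub>v x) $ 0" for x
  have pv: "\<And>x. x \<in> carrier_vec dB \<Longrightarrow> (pm *\<^sub>v x = 0\<^sub>v 1) = (p x = 0)"
  proof -
    fix x :: "'a vec" assume x: "x \<in> carrier_vec dB"
    show "(pm *\<^sub>v x = 0\<^sub>v 1) = (p x = 0)"
    proof
      assume "pm *\<^sub>v x = 0\<^sub>v 1" thus "p x = 0" unfolding p_def by simp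
    next
      assume "p x = 0" thus "pm *\<^sub>v x = 0\<^sub>v 1" unfolding p_def using pmc x
        by (intro eq_vecI) auto
    qed
  qed
  have p_add: "\<And>x y. x \<in> carrier_vec dB \<Longrightarrow> y \<in> carrier_vec dB \<Longrightarrow> p (x + y) = p x + p y"
    unfolding p_def using pmc by (simp add: mult_add_distrib_mat_vec)
  have p_smult: "\<And>x c. x \<in> carrier_vec dB \<Longrightarrow> p (c \<cdot>\<^sub>v x) = c * p x"
    unfolding p_def using pmc by (simp add: mult_mat_vec)
  have p_T: "\<And>x i. i < n \<Longrightarrow> x \<in> carrier_vec dB \<Longrightarrow> p (T i *\<^sub>v x) = - p x"
  proof -
    fix x :: "'a vec" and i assume i: "i < n" and x: "x \<in> carrier_vec dB"
    have "pm *\<^sub>v (T i *\<^sub>v x) = (pm * T i) *\<^sub>v x" using pmc CT[OF i] x by simp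
    also have "\<dots> = (mone * pm) *\<^sub>v x" using pmT[OF i] by simp
    also have "\<dots> = mone *\<^sub>v (pm *\<^sub>v x)" by (rule assoc_mult_mat_vec[OF mone_carrier pmc x])
    finally show "p (T i *\<^sub>v x) = - p x" unfolding p_def using mone_vec[of "pm *\<^sub>v x"] pmc x by simp
  qed
  have p_zero: "p (0\<^sub>v dB) = 0" unfolding p_def using pmc by (simp, subst scalar_prod_right_zero) (auto simp: row_def)
  have w1: "vec 1 (\<lambda>_. 1) \<in> carrier_vec (dim_row pm)" using pmc by auto
  obtain x0 where x0: "x0 \<in> carrier_vec (dim_col pm)" "pm *\<^sub>v x0 = vec 1 (\<lambda>_. 1)"
    using pms w1 unfolding surj_mat_def by blast
  have x0c: "x0 \<in> carrier_vec dB" using x0 pmc by auto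
  have px0: "p x0 = 1" unfolding p_def using x0 by simp
  have T00: "\<And>x. x \<in> carrier_vec dB \<Longrightarrow> T 0 *\<^sub>v (T 0 *\<^sub>v x) = x"
  proof -
    fix x :: "'a vec" assume x: "x \<in> carrier_vec dB"
    have "T 0 *\<^sub>v (T 0 *\<^sub>v x) = (T 0 * T 0) *\<^sub>v x" using CT0 x by simp
    thus "T 0 *\<^sub>v (T 0 *\<^sub>v x) = x" using I0 x by simp
  qed
  have bsup: "V = carrier_vec dB" if sV: "submodule n PB V" and vV: "v \<in> V" and pvnz: "p v \<noteq> 0" for V v
  proof -
    have Vc: "V \<subseteq> carrier_vec dB" using sV PBd unfolding submodule_def by auto
    have Vsm: "\<And>c u. u \<in> V \<Longrightarrow> c \<cdot>\<^sub>v u \<in> V" using sV unfolding submodule_def by auto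
    have "{u + k | u k. u \<in> V \<and> k \<in> carrier_vec dB \<and> pm *\<^sub>v k = 0\<^sub>v 1} = carrier_vec dB"
    proof
      show "{u + k | u k. u \<in> V \<and> k \<in> carrier_vec dB \<and> pm *\<^sub>v k = 0\<^sub>v 1} \<subseteq> carrier_vec dB" using Vc by auto
      show "carrier_vec dB \<subseteq> {u + k | u k. u \<in> V \<and> k \<in> carrier_vec dB \<and> pm *\<^sub>v k = 0\<^sub>v 1}"
      proof
        fix x :: "'a vec" assume x: "x \<in> carrier_vec dB"
        have vc: "v \<in> carrier_vec dB" using vV Vc by auto
        define c where "c = p x / p v"
        have uV: "c \<cdot>\<^sub>v v \<in> V" using Vsm vV by auto
        have uc: "c \<cdot>\<^sub>v v \<in> carrier_vec dB" using vc by auto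
        have kc: "x - c \<cdot>\<^sub>v v \<in> carrier_vec dB" using x vc by auto
        have "x - c \<cdot>\<^sub>v v = x + (-1) \<cdot>\<^sub>v (c \<cdot>\<^sub>v v)" using x vc by (intro eq_vecI) auto
        hence "p (x - c \<cdot>\<^sub>v v) = p x + (-1) * (c * p v)" using p_add p_smult x uc vc by simp
        also have "\<dots> = 0" using pvnz unfolding c_def by simp
        finally have "pm *\<^sub>v (x - c \<cdot>\<^sub>v v) = 0\<^sub>v 1" using pv kc by simp
        moreover have "x = c \<cdot>\<^sub>v v + (x - c \<cdot>\<^sub>v v)" using vec_add_diff[OF uc x] by simp
        ultimately show "x \<in> {u + k | u k. u \<in> V \<and> k \<in> carrier_vec dB \<and> pm *\<^sub>v k = 0\<^sub>v 1}"
          using uV kc by blast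
      qed
    qed
    hence key: "{u + k | u k. u \<in> V \<and> k \<in> carrier_vec (fst PB) \<and> pm *\<^sub>v k = 0\<^sub>v (fst (sign_rep :: 'a rep))} = carrier_vec (fst PB)"
      unfolding PBd fst_conv sign_rep_snd .
    have "V = carrier_vec (fst PB)" using spec[OF supB, of V] sV key by blast
    thus ?thesis unfolding PBd by simp
  qed
  define S' where "S' i = (if i = 1 then T 0 * T 1 * T 0 else T i)" for i
  have S'c: "\<And>i. i < n \<Longrightarrow> S' i \<in> carrier_mat dB dB" unfolding S'_def using CT CT0 CT1 by (auto intro!: sqc)
  have S'T: "\<And>i u. 1 \<le> i \<Longrightarrow> i < n \<Longrightarrow> u \<in> carrier_vec dB \<Longrightarrow> T i *\<^sub>v (T 0 *\<^sub>v u) = T 0 *\<^sub>v (S' i *\<^sub>v u)"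
  proof -
    fix i and u :: "'a vec" assume i: "1 \<le> i" "i < n" and u: "u \<in> carrier_vec dB"
    show "T i *\<^sub>v (T 0 *\<^sub>v u) = T 0 *\<^sub>v (S' i *\<^sub>v u)"
    proof (cases "i = 1")
      case True
      have si: "S' i = T 0 * T 1 * T 0" unfolding S'_def using True by simp
      have "T 0 *\<^sub>v (S' i *\<^sub>v u) = T 0 *\<^sub>v (T 0 *\<^sub>v (T 1 *\<^sub>v (T 0 *\<^sub>v u)))"
        unfolding si mvec3[OF CT0 CT1 CT0 u] by (rule refl)
      also have "\<dots> = T 1 *\<^sub>v (T 0 *\<^sub>v u)" using T00 CT0 CT1 u by simp
      finally show ?thesis using True by simp
    next
      case False
      have c: "T 0 * T i = T i * T 0" using Co[of 0 i] i False by auto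
      have Ti: "T i \<in> carrier_mat dB dB" using CT i by auto
      have "T i *\<^sub>v (T 0 *\<^sub>v u) = (T i * T 0) *\<^sub>v u" using Ti CT0 u by simp
      also have "\<dots> = (T 0 * T i) *\<^sub>v u" by (simp only: c)
      also have "\<dots> = T 0 *\<^sub>v (T i *\<^sub>v u)" using Ti CT0 u by simp
      finally show ?thesis unfolding S'_def using False by simp
    qed
  qed
  have pS': "\<And>i u. 1 \<le> i \<Longrightarrow> i < n \<Longrightarrow> u \<in> carrier_vec dB \<Longrightarrow> p (S' i *\<^sub>v u) = - p u"
  proof -
    fix i and u :: "'a vec" assume i: "1 \<le> i" "i < n" and u: "u \<in> carrier_vec dB"
    show "p (S' i *\<^sub>v u) = - p u"
    proof (cases "i = 1")
      case True
      have si: "S' i = T 0 * T 1 * T 0" unfolding S'_def using True by simp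
      have "S' i *\<^sub>v u = T 0 *\<^sub>v (T 1 *\<^sub>v (T 0 *\<^sub>v u))" unfolding si mvec3[OF CT0 CT1 CT0 u] by (rule refl)
      thus ?thesis using p_T[of 0] p_T[of 1] n u CT0 CT1 by simp
    next
      case False thus ?thesis unfolding S'_def using p_T i u by simp
    qed
  qed
  have D_sup: "U = carrier_vec dB" if sU: "submodule n (Res PB) U"
    and sum: "{u + k | u k. u \<in> U \<and> k \<in> carrier_vec dB \<and> pm *\<^sub>v k = 0\<^sub>v 1} = carrier_vec dB" for U
  proof -
    have Uc: "U \<subseteq> carrier_vec dB" using sU RPB unfolding submodule_def by auto
    have U0: "0\<^sub>v dB \<in> U" using sU RPB unfolding submodule_def by auto
    have Uadd: "\<And>u v. u \<in> U \<Longrightarrow> v \<in> U \<Longrightarrow> u + v \<in> U" using sU unfolding submodule_def by auto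
    have Usm: "\<And>c u. u \<in> U \<Longrightarrow> c \<cdot>\<^sub>v u \<in> U" using sU unfolding submodule_def by auto
    have Uact: "\<And>i u. i < n \<Longrightarrow> u \<in> U \<Longrightarrow> (if i = 0 then T 0 * T 1 * T 0 else T i) *\<^sub>v u \<in> U"
      using sU RPB unfolding submodule_def by auto
    have UT: "\<And>i u. 1 \<le> i \<Longrightarrow> i < n \<Longrightarrow> u \<in> U \<Longrightarrow> T i *\<^sub>v u \<in> U" using Uact by fastforce
    have US': "\<And>i u. 1 \<le> i \<Longrightarrow> i < n \<Longrightarrow> u \<in> U \<Longrightarrow> S' i *\<^sub>v u \<in> U"
    proof -
      fix i and u :: "'a vec" assume i: "1 \<le> i" "i < n" and u: "u \<in> U"
      show "S' i *\<^sub>v u \<in> U"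
      proof (cases "i = 1")
        case True thus ?thesis unfolding S'_def using Uact[of 0 u] u n by simp
      next
        case False thus ?thesis unfolding S'_def using UT i u by simp
      qed
    qed
    have "x0 \<in> {u + k | u k. u \<in> U \<and> k \<in> carrier_vec dB \<and> pm *\<^sub>v k = 0\<^sub>v 1}" using sum x0c by simp
    then obtain u0 k0 where u0: "u0 \<in> U" "k0 \<in> carrier_vec dB" "pm *\<^sub>v k0 = 0\<^sub>v 1" "x0 = u0 + k0" by blast
    have u0c: "u0 \<in> carrier_vec dB" using u0 Uc by auto
    have pu0: "p u0 = 1" using px0 u0 u0c p_add pv by simp
    define W where "W = {w. w \<in> U \<and> T 0 *\<^sub>v w \<in> U}"
    have sW: "submodule n PB W" unfolding submodule_def PBd fst_conv snd_conv
    proof (intro conjI ballI allI impI)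
      show "W \<subseteq> carrier_vec dB" unfolding W_def using Uc by auto
      show "0\<^sub>v dB \<in> W" unfolding W_def using U0 CT0 mat_zero_vec[OF CT0] by auto
      fix u :: "'a vec" assume u: "u \<in> W"
      hence uU: "u \<in> U" "T 0 *\<^sub>v u \<in> U" and uc: "u \<in> carrier_vec dB" unfolding W_def using Uc by auto
      { fix v :: "'a vec" assume "v \<in> W"
        hence vU: "v \<in> U" "T 0 *\<^sub>v v \<in> U" and vc: "v \<in> carrier_vec dB" unfolding W_def using Uc by auto
        have "T 0 *\<^sub>v (u + v) = T 0 *\<^sub>v u + T 0 *\<^sub>v v" using CT0 uc vc by (simp add: mult_add_distrib_mat_vec)
        thus "u + v \<in> W" unfolding W_def using Uadd uU vU by auto }
      { fix c :: 'a
        have "T 0 *\<^sub>v (c \<cdot>\<^sub>v u) = c \<cdot>\<^sub>v (T 0 *\<^sub>v u)" using CT0 uc by (simp add: mult_mat_vec)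
        thus "c \<cdot>\<^sub>v u \<in> W" unfolding W_def using Usm uU by auto }
      { fix i assume i: "i < n"
        show "T i *\<^sub>v u \<in> W"
        proof (cases "i = 0")
          case True thus ?thesis unfolding W_def using uU T00 uc by simp
        next
          case False
          have "T 0 *\<^sub>v (T i *\<^sub>v u) = S' i *\<^sub>v (T 0 *\<^sub>v u)"
          proof -
            have tc: "T 0 *\<^sub>v u \<in> carrier_vec dB" using CT0 uc by auto
            have "T i *\<^sub>v (T 0 *\<^sub>v (T 0 *\<^sub>v u)) = T 0 *\<^sub>v (S' i *\<^sub>v (T 0 *\<^sub>v u))" using S'T[OF _ i tc] False by simp
            hence "T i *\<^sub>v u = T 0 *\<^sub>v (S' i *\<^sub>v (T 0 *\<^sub>v u))" using T00 uc by simp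
            hence "T 0 *\<^sub>v (T i *\<^sub>v u) = T 0 *\<^sub>v (T 0 *\<^sub>v (S' i *\<^sub>v (T 0 *\<^sub>v u)))" by simp
            also have "\<dots> = S' i *\<^sub>v (T 0 *\<^sub>v u)" using T00 S'c[OF i] tc by simp
            finally show ?thesis .
          qed
          thus ?thesis unfolding W_def using UT[of i u] US'[of i "T 0 *\<^sub>v u"] uU i False by simp
        qed }
    qed
    show ?thesis
    proof (cases "\<exists>w \<in> W. p w \<noteq> 0")
      case True
      then obtain w where "w \<in> W" "p w \<noteq> 0" by blast
      hence "W = carrier_vec dB" using bsup[OF sW] by blast
      thus ?thesis using Uc unfolding W_def by auto
    next
      case False
      hence W0: "\<And>w. w \<in> W \<Longrightarrow> p w = 0" by blast
      define V where "V = {u + T 0 *\<^sub>v u' | u u'. u \<in> U \<and> u' \<in> U \<and> p u + p u' = 0}"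
      have sV: "submodule n PB V" unfolding submodule_def PBd fst_conv snd_conv
      proof (intro conjI ballI allI impI)
        show "V \<subseteq> carrier_vec dB"
        proof
          fix x assume "x \<in> V"
          then obtain u u' where "u \<in> U" "u' \<in> U" "x = u + T 0 *\<^sub>v u'" unfolding V_def by blast
          moreover have "u \<in> carrier_vec dB" "u' \<in> carrier_vec dB" using calculation Uc by auto
          ultimately show "x \<in> carrier_vec dB" using CT0 by auto
        qed
        have "0\<^sub>v dB = 0\<^sub>v dB + T 0 *\<^sub>v 0\<^sub>v dB" using CT0 mat_zero_vec[OF CT0] by auto
        thus "0\<^sub>v dB \<in> V" unfolding V_def using U0 p_zero by fastforce
        fix x :: "'a vec" assume "x \<in> V"
        then obtain u u' where uu: "u \<in> U" "u' \<in> U" "p u + p u' = 0" "x = u + T 0 *\<^sub>v u'"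
          unfolding V_def by blast
        have uc: "u \<in> carrier_vec dB" "u' \<in> carrier_vec dB" using uu Uc by auto
        { fix y :: "'a vec" assume "y \<in> V"
          then obtain v v' where vv: "v \<in> U" "v' \<in> U" "p v + p v' = 0" "y = v + T 0 *\<^sub>v v'"
            unfolding V_def by blast
          have vc: "v \<in> carrier_vec dB" "v' \<in> carrier_vec dB" using vv Uc by auto
          have "x + y = (u + v) + T 0 *\<^sub>v (u' + v')" unfolding uu(4) vv(4)
            using uc vc CT0 by (simp add: mult_add_distrib_mat_vec) (intro eq_vecI, auto)
          moreover have "p (u + v) + p (u' + v') = 0" using p_add uc vc uu vv by (simp add: algebra_simps)
          ultimately show "x + y \<in> V" unfolding V_def using Uadd uu vv by blast }
        { fix c :: 'a
          have "c \<cdot>\<^sub>v x = c \<cdot>\<^sub>v u + T 0 *\<^sub>v (c \<cdot>\<^sub>v u')" unfolding uu(4)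
            using uc CT0 by (simp add: mult_mat_vec smult_add_distrib_vec[of _ dB])
          moreover have "p (c \<cdot>\<^sub>v u) + p (c \<cdot>\<^sub>v u') = 0" using p_smult uc uu(3)
            by (simp add: distrib_left[symmetric])
          ultimately show "c \<cdot>\<^sub>v x \<in> V" unfolding V_def using Usm uu by blast }
        { fix i assume i: "i < n"
          show "T i *\<^sub>v x \<in> V"
          proof (cases "i = 0")
            case True
            have "T 0 *\<^sub>v x = u' + T 0 *\<^sub>v u" unfolding uu(4)
              using uc CT0 T00 by (simp add: mult_add_distrib_mat_vec comm_add_vec[of _ dB])
            moreover have "p u' + p u = 0" using uu(3) by (simp add: add.commute)
            ultimately show ?thesis unfolding V_def using uu True by blast
          next
            case False
            have Ti: "T i \<in> carrier_mat dB dB" using CT i by auto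
            have "T i *\<^sub>v x = T i *\<^sub>v u + T 0 *\<^sub>v (S' i *\<^sub>v u')" unfolding uu(4)
              using uc CT0 Ti S'T[of i u'] i False by (simp add: mult_add_distrib_mat_vec)
            moreover have "p (T i *\<^sub>v u) + p (S' i *\<^sub>v u') = 0"
              using p_T[OF i uc(1)] pS'[of i u'] i False uc uu(3) by (simp add: add_eq_0_iff)
            moreover have "T i *\<^sub>v u \<in> U" "S' i *\<^sub>v u' \<in> U" using UT US' uu i False by auto
            ultimately show ?thesis unfolding V_def by blast
          qed }
      qed
      have u0c': "(-1) \<cdot>\<^sub>v u0 \<in> carrier_vec dB" using u0c by auto
      let ?y = "u0 + T 0 *\<^sub>v ((-1) \<cdot>\<^sub>v u0)"
      have yV: "?y \<in> V" unfolding V_def using u0 Usm p_smult u0c by fastforce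
      have "p ?y = p u0 + - p ((-1) \<cdot>\<^sub>v u0)" using p_add p_T[of 0] n u0c u0c' CT0 by simp
      also have "\<dots> = 2" using p_smult u0c pu0 by simp
      finally have "p ?y \<noteq> 0" using two by simp
      hence VC: "V = carrier_vec dB" using bsup[OF sV yV] by simp
      hence "u0 \<in> V" using u0c by simp
      then obtain u u' where uu: "u \<in> U" "u' \<in> U" "p u + p u' = 0" "u0 = u + T 0 *\<^sub>v u'"
        unfolding V_def by blast
      have uc: "u \<in> carrier_vec dB" "u' \<in> carrier_vec dB" using uu Uc by auto
      have e: "T 0 *\<^sub>v u' = u0 + (-1) \<cdot>\<^sub>v u" unfolding uu(4) using uc CT0 by (intro eq_vecI) auto
      have "T 0 *\<^sub>v u' \<in> U" unfolding e by (rule Uadd[OF u0(1) Usm[OF uu(1)]])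
      hence "u' \<in> W" unfolding W_def using uu by auto
      hence pu': "p u' = 0" using W0 by simp
      have "p u0 = p u + p (T 0 *\<^sub>v u')" using uu(4) p_add uc CT0 by simp
      also have "\<dots> = 0" using pu' uu(3) p_T[of 0] n uc by simp
      finally show ?thesis using pu0 by simp
    qed
  qed
  have pmD: "rep_hom n (Res PB) sign_rep pm"
    unfolding rep_hom_def RPB fst_conv snd_conv sign_rep_snd
  proof (intro conjI allI impI)
    show "pm \<in> carrier_mat 1 dB" by (rule pmc)
    fix i assume i: "i < n"
    show "pm * (if i = 0 then T 0 * T 1 * T 0 else T i) = mone * pm"
    proof (cases "i = 0")
      case True
      have "pm * (T 0 * T 1 * T 0) = pm * T 0 * T 1 * T 0" by (rule rassoc4[OF pmc CT0 CT1 CT0])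
      also have "\<dots> = mone * pm * T 1 * T 0" using pmT[of 0] n by simp
      also have "\<dots> = mone * (pm * T 1) * T 0" by (simp only: assoc_mult_mat[OF mone_carrier pmc CT1])
      also have "\<dots> = mone * (mone * pm) * T 0" using pmT[of 1] n by simp
      also have "\<dots> = pm * T 0"
      proof -
        have "mone * (mone * pm) = (mone * mone) * pm" by (rule assoc_mult_mat[symmetric, OF mone_carrier mone_carrier pmc])
        also have "\<dots> = pm" unfolding mone_sq using pmc by (rule left_mult_one_mat)
        finally show ?thesis by simp
      qed
      also have "\<dots> = mone * pm" using pmT[of 0] n by simp
      finally show ?thesis using True by simp
    next
      case False thus ?thesis using pmT[OF i] by simp
    qed
  qed
  show ?thesis unfolding projective_cover_def
  proof (intro conjI exI[of _ pm])
    show "projective_rep (hecke_D_rep q n) n (Res PB)" by (rule res_proj[OF prB n])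
    show "hecke_D_rep q n sign_rep" by (rule sign_D)
    show "rep_hom n (Res PB) sign_rep pm" by (rule pmD)
    show "surj_mat pm" by (rule pms)
    show "\<forall>U. submodule n (Res PB) U \<and>
        {u + k |u k. u \<in> U \<and> k \<in> carrier_vec (fst (Res PB)) \<and> pm *\<^sub>v k = 0\<^sub>v (fst sign_rep)} =
        carrier_vec (fst (Res PB)) \<longrightarrow> U = carrier_vec (fst (Res PB))"
      using D_sup unfolding RPB fst_conv sign_rep_snd by blast
  qed
qed



lemma D_carrier: "hecke_D_rep q n M \<Longrightarrow> i < n \<Longrightarrow> snd M i \<in> carrier_mat (fst M) (fst M)"
  unfolding hecke_D_rep_def Let_def by auto

theorem lemma3p6:
  fixes q :: "'a::field" and e :: nat and P PB :: "'a rep"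
  assumes "primitive_root_of_unity q e" and "even e" and "e \<ge> 2"
    and "projective_cover (hecke_D_rep q e) e P sign_rep"
    and "projective_cover (hecke_B_rep q e) e PB sign_rep"
  shows "rep_iso e P (Res PB)"
proof -
  have two: "(2::'a) \<noteq> 0" by (rule two_nz[OF assms(1-3)])
  have cR: "projective_cover (hecke_D_rep q e) e (Res PB) sign_rep" by (rule res_cover[OF assms(5) assms(3) two])
  have HP: "hecke_D_rep q e P" using assms(4) unfolding projective_cover_def projective_rep_def by blast
  have HR: "hecke_D_rep q e (Res PB)" using cR unfolding projective_cover_def projective_rep_def by blast
  show ?thesis by (rule covers_iso[OF assms(4) cR]) (auto intro: D_carrier[OF HP] D_carrier[OF HR])
qed


end
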